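(* There is an absolute constant $c>0$ such that for all positive integers $n,k$ with $k\le 2^{n/50}$ for which $w<n/2$ (with $w,p$ as in the context), the chain $\widetilde P^{\mathsf{grev}}$ on $\mathsf{Generic}_{k,n}$ satisfies $$\alpha\bigl(\widetilde P^{\mathsf{grev}}\bigr)\;\ge\;\frac{c}{nk}.$$
   Context: Generic states: let $w=\lceil 10(\log_2 k+\log_2 n)\rceil$ and $p=\lceil n/(2w)\rceil$. Fix a partition of $[n]$ into sets $C_1,\dots,C_p,C$ with $|C_t|=w$ for $t\in[p]$ and $|C|=n-pw$. For $x\in\{0,1\}^n$ and $S\subseteq[n]$, $x_S$ denotes the restriction of $x$ to the coordinates in $S$; for a tuple $x=(x_1,\dots,x_k)$ of $n$-bit strings, $x_{i,j}$ is the $j$-th bit of $x_i$. A tuple $(x_1,\dots,x_k)$ of $n$-bit strings is generic if for every $i\ne i'$ and every $t\in[p]$, $x_{i,C_t}\ne x_{i',C_t}$. $\mathsf{Generic}_{k,n}$ is the set of generic tuples. Product chain $\widetilde P^{\mathsf{grev}}$ on $\mathsf{Generic}_{k,n}$: from current state $x$, the next state $\boldsymbol y$ is sampled as follows. With probability $1/2$: toss a fair coin; on heads set $\boldsymbol y=x$; on tails pick uniform $\boldsymbol c\in C$, $\boldsymbol r\in[k]$ and let $\boldsymbol y$ be $x$ with the bit $x_{\boldsymbol r,\boldsymbol c}$ flipped. With the other probability $1/2$: pick uniform $\boldsymbol\ell\in[p]$, $\boldsymbol r\in[k]$ and a uniformly random string $\boldsymbol u\in\{0,1\}^w$ subject to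 $\boldsymbol u\ne x_{i,C_{\boldsymbol\ell}}$ for all $i\ne\boldsymbol r$, and let $\boldsymbol y$ be $x$ with $x_{\boldsymbol r,C_{\boldsymbol\ell}}$ replaced by $\boldsymbol u$ (all other bits unchanged). Its stationary distribution is uniform on $\mathsf{Generic}_{k,n}$. Log-Sobolev constant: for an ergodic chain $P$ on finite $V$ with stationary $\pi$, $\mathcal E_P(g,g)=\frac12\sum_{x,y}(g(x)-g(y))^2\pi(x)P(x,y)$, $\mathrm{Ent}_\pi[f]=\sum_x\pi(x)f(x)\log\frac{f(x)}{\mathbb E_\pi f}$ for $f\ge0$ (natural log), and $\alpha(P)=\inf\{\mathcal E_P(\sqrt f,\sqrt f)/\mathrm{Ent}_\pi[f]: f\ge0\text{ non-constant}\}$. *)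

theory Defs
  imports Complex_Main
begin

definition dirichlet_form :: "'a set \<Rightarrow> ('a \<Rightarrow> real) \<Rightarrow> ('a \<Rightarrow> 'a \<Rightarrow> real) \<Rightarrow> ('a \<Rightarrow> real) \<Rightarrow> real" where
  "dirichlet_form V mu P g = (1/2) * (\<Sum>x\<in>V. \<Sum>y\<in>V. (g x - g y)^2 * mu x * P x y)"

definition entropy :: "'a set \<Rightarrow> ('a \<Rightarrow> real) \<Rightarrow> ('a \<Rightarrow> real) \<Rightarrow> real" where
  "entropy V mu f = (\<Sum>x\<in>V. mu x * f x * ln (f x / (\<Sum>y\<in>V. mu y * f y)))"

text \<open>Log-Sobolev constant (natural log; note 0 * ln 0 = 0 in Isabelle).\<close>
definition log_sobolev :: "'a set \<Rightarrow> ('a \<Rightarrow> real) \<Rightarrow> ('a \<Rightarrow> 'a \<Rightarrow> real) \<Rightarrow> real" where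
  "log_sobolev V mu P = Inf {dirichlet_form V mu P (\<lambda>x. sqrt (f x)) / entropy V mu f | f.
       (\<forall>x\<in>V. 0 \<le> f x) \<and> (\<exists>x\<in>V. \<exists>y\<in>V. f x \<noteq> f y)}"

definition wpar :: "nat \<Rightarrow> nat \<Rightarrow> nat" where
  "wpar k n = nat \<lceil>10 * (log 2 (real k) + log 2 (real n))\<rceil>"

definition ppar :: "nat \<Rightarrow> nat \<Rightarrow> nat" where
  "ppar k n = nat \<lceil>real n / (2 * real (wpar k n))\<rceil>"

text \<open>A tuple of k n-bit strings is a function x with x i j the j-th bit of the i-th
  string (indices 0-based: i < k, j < n), extensional (False outside the range).
  Blocks C_1..C_p are B 0 .. B (p-1), the leftover set is C.\<close>

type_synonym tuple = "nat \<Rightarrow> nat \<Rightarrow> bool"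

definition generic_set :: "nat \<Rightarrow> nat \<Rightarrow> (nat \<Rightarrow> nat set) \<Rightarrow> tuple set" where
  "generic_set k n B = {x. (\<forall>i j. (k \<le> i \<or> n \<le> j) \<longrightarrow> \<not> x i j) \<and>
      (\<forall>i<k. \<forall>i'<k. i \<noteq> i' \<longrightarrow> (\<forall>t<ppar k n. \<exists>j\<in>B t. x i j \<noteq> x i' j))}"

definition flip_bit :: "tuple \<Rightarrow> nat \<Rightarrow> nat \<Rightarrow> tuple" where
  "flip_bit x r c = x(r := (x r)(c := \<not> x r c))"

definition repl_set :: "nat \<Rightarrow> (nat \<Rightarrow> nat set) \<Rightarrow> tuple \<Rightarrow> nat \<Rightarrow> nat \<Rightarrow> tuple set" where
  "repl_set k B x l r = {y. (\<forall>i j. (i \<noteq> r \<or> j \<notin> B l) \<longrightarrow> y i j = x i j) \<and>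
      (\<forall>i<k. i \<noteq> r \<longrightarrow> (\<exists>j\<in>B l. y r j \<noteq> x i j))}"

definition P_grev :: "nat \<Rightarrow> nat \<Rightarrow> (nat \<Rightarrow> nat set) \<Rightarrow> nat set \<Rightarrow> tuple \<Rightarrow> tuple \<Rightarrow> real" where
  "P_grev k n B C x y =
     (if x = y then 1/4 else 0)
     + (1/4) * real (card {(c, r). c \<in> C \<and> r < k \<and> flip_bit x r c = y}) / (real (card C) * real k)
     + (1/2) * (\<Sum>l<ppar k n. \<Sum>r<k.
          (if y \<in> repl_set k B x l r then 1 / real (card (repl_set k B x l r)) else 0))
          / (real (ppar k n) * real k)"

definition uniform_on :: "'a set \<Rightarrow> 'a \<Rightarrow> real" where
  "uniform_on V x = 1 / real (card V)"

end

theory Submission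
  imports Defs
begin


definition avg :: "'a set \<Rightarrow> ('a \<Rightarrow> real) \<Rightarrow> real" where
  "avg A F = (\<Sum>x\<in>A. F x) / real (card A)"

definition ent :: "'a set \<Rightarrow> ('a \<Rightarrow> real) \<Rightarrow> real" where
  "ent A F = (\<Sum>x\<in>A. F x * ln (F x / avg A F)) / real (card A)"

definition var :: "'a set \<Rightarrow> ('a \<Rightarrow> real) \<Rightarrow> real" where
  "var A g = (\<Sum>y\<in>A. \<Sum>z\<in>A. (g y - g z)^2) / (2 * real (card A)^2)"

lemma ln_ge_one_minus_inv: "0 < (z::real) \<Longrightarrow> 1 - 1/z \<le> ln z"
  using ln_le_minus_one[of "1/z"] by (simp add: ln_div)

lemma ln_less_minus_one: assumes "0 < (x::real)" "x \<noteq> 1" shows "ln x < x - 1"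
proof -
  have s: "0 < sqrt x" using assms by simp
  have "ln x = 2 * ln (sqrt x)" using assms by (simp add: ln_sqrt)
  also have "\<dots> \<le> 2 * (sqrt x - 1)" using ln_le_minus_one[OF s] by simp
  also have "\<dots> < x - 1"
  proof -
    have "sqrt x \<noteq> 1" using assms by simp
    then have "0 < (sqrt x - 1)^2" by simp
    also have "(sqrt x - 1)^2 = x - 2 * sqrt x + 1" using assms
      by (simp add: power2_eq_square algebra_simps)
    finally show ?thesis by simp
  qed
  finally show ?thesis .
qed

lemma ln_gt_one_minus_inv: "0 < (z::real) \<Longrightarrow> z \<noteq> 1 \<Longrightarrow> 1 - 1/z < ln z"
  using ln_less_minus_one[of "1/z"] by (simp add: ln_div)

lemma log_sum_ineq:
  fixes a b :: "'u \<Rightarrow> real"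
  assumes fin: "finite U" and a0: "\<And>u. u \<in> U \<Longrightarrow> 0 \<le> a u" and b0: "\<And>u. u \<in> U \<Longrightarrow> 0 \<le> b u"
    and ab: "\<And>u. u \<in> U \<Longrightarrow> 0 < a u \<Longrightarrow> 0 < b u"
  shows "(\<Sum>u\<in>U. a u) * ln ((\<Sum>u\<in>U. a u) / (\<Sum>u\<in>U. b u)) \<le> (\<Sum>u\<in>U. a u * ln (a u / b u))"
proof (cases "(\<Sum>u\<in>U. a u) = 0")
  case True
  then have "\<forall>u\<in>U. a u = 0" using sum_nonneg_eq_0_iff[OF fin] a0 by blast
  then show ?thesis using True by simp
next
  case False
  define A where "A = (\<Sum>u\<in>U. a u)"
  define B where "B = (\<Sum>u\<in>U. b u)"
  have A0: "0 < A" using False a0 unfolding A_def by (simp add: less_le sum_nonneg)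
  then obtain u0 where u0: "u0 \<in> U" "0 < a u0" unfolding A_def
    by (metis (no_types, lifting) a0 less_eq_real_def sum_nonneg_eq_0_iff[OF fin] False)
  have B0: "0 < B" unfolding B_def
    using ab[OF u0] member_le_sum[of u0 U b, OF u0(1) b0 fin] by simp
  have pw: "a u * ln (A / B) + a u - b u * (A / B) \<le> a u * ln (a u / b u)" if u: "u \<in> U" for u
  proof (cases "a u = 0")
    case True then show ?thesis using b0[OF u] A0 B0 by simp
  next
    case False
    then have au: "0 < a u" using a0[OF u] by simp
    have bu: "0 < b u" using ab[OF u au] .
    have z: "0 < (a u * B) / (b u * A)" using au bu A0 B0 by simp
    have "1 - 1 / ((a u * B) / (b u * A)) \<le> ln ((a u * B) / (b u * A))"
      by (rule ln_ge_one_minus_inv[OF z])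
    also have "ln ((a u * B) / (b u * A)) = ln (a u / b u) - ln (A / B)"
      using au bu A0 B0 by (simp add: ln_div ln_mult)
    finally have "a u * (1 - 1 / ((a u * B) / (b u * A))) \<le> a u * (ln (a u / b u) - ln (A / B))"
      using au by (simp add: mult_left_mono)
    moreover have "a u * (1 - 1 / ((a u * B) / (b u * A))) = a u - b u * (A / B)"
      using au bu A0 B0 by (simp add: field_simps)
    ultimately show ?thesis by (simp add: algebra_simps)
  qed
  have "(\<Sum>u\<in>U. a u * ln (A / B) + a u - b u * (A / B)) \<le> (\<Sum>u\<in>U. a u * ln (a u / b u))"
    by (rule sum_mono) (use pw in auto)
  moreover have "(\<Sum>u\<in>U. a u * ln (A / B) + a u - b u * (A / B)) = A * ln (A / B) + A - B * (A / B)"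
    unfolding A_def B_def by (simp add: sum.distrib sum_subtractf sum_distrib_right sum_divide_distrib)
  moreover have "B * (A / B) = A" using B0 by simp
  ultimately show ?thesis unfolding A_def B_def by simp
qed

lemma ent_nonneg:
  assumes fin: "finite A" and F0: "\<And>x. x \<in> A \<Longrightarrow> 0 \<le> F x"
  shows "0 \<le> ent A F"
proof (cases "A = {}")
  case True then show ?thesis by (simp add: ent_def)
next
  case False
  have cA: "0 < real (card A)" using False fin by (simp add: card_gt_0_iff)
  have ab: "0 < avg A F" if "x \<in> A" "0 < F x" for x
    unfolding avg_def using member_le_sum[of x A F] that F0 fin cA by (simp add: less_le_trans)
  have "(\<Sum>x\<in>A. F x) * ln ((\<Sum>x\<in>A. F x) / (\<Sum>x\<in>A. avg A F)) \<le> (\<Sum>x\<in>A. F x * ln (F x / avg A F))"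
    by (rule log_sum_ineq[OF fin F0]) (use ab F0 in \<open>auto simp: avg_def intro!: divide_nonneg_nonneg sum_nonneg\<close>)
  moreover have "(\<Sum>x\<in>A. avg A F) = (\<Sum>x\<in>A. F x)" using cA by (simp add: avg_def)
  ultimately have "0 \<le> (\<Sum>x\<in>A. F x * ln (F x / avg A F))"
    by (cases "(\<Sum>x\<in>A. F x) = 0") auto
  then show ?thesis unfolding ent_def by simp
qed

lemma sum_eq_card_avg: "finite A \<Longrightarrow> A \<noteq> {} \<Longrightarrow> (\<Sum>x\<in>A. F x) = real (card A) * avg A F"
  by (simp add: avg_def)

lemma ent_pos:
  assumes fin: "finite A" and F0: "\<And>x. x \<in> A \<Longrightarrow> 0 \<le> F x"
    and x: "x \<in> A" and y: "y \<in> A" and ne: "F x \<noteq> F y"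
  shows "0 < ent A F"
proof -
  have Ane: "A \<noteq> {}" using x by auto
  have cA: "0 < real (card A)" using Ane fin by (simp add: card_gt_0_iff)
  define m where "m = avg A F"
  have sumF: "(\<Sum>z\<in>A. F z) = real (card A) * m" unfolding m_def using sum_eq_card_avg[OF fin Ane] .
  have "\<exists>z\<in>A. m < F z"
  proof (rule ccontr)
    assume "\<not> ?thesis"
    then have le: "\<forall>z\<in>A. F z \<le> m" by auto
    have "(\<Sum>z\<in>A. m - F z) = 0" using sumF by (simp add: sum_subtractf)
    then have all: "\<forall>z\<in>A. m - F z = 0" using sum_nonneg_eq_0_iff[OF fin, of "\<lambda>z. m - F z"] le by auto
    have "m - F x = 0" using all x by (rule bspec)
    moreover have "m - F y = 0" using all y by (rule bspec)
    ultimately show False using ne by linarith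
  qed
  then obtain z where z: "z \<in> A" "m < F z" by auto
  have m0: "0 \<le> m" unfolding m_def avg_def using F0 by (simp add: sum_nonneg)
  have mpos: "0 < m"
  proof -
    have "F z \<le> (\<Sum>z\<in>A. F z)" by (rule member_le_sum) (use z F0 fin in auto)
    then have "0 < real (card A) * m" using sumF z m0 by linarith
    then show ?thesis using cA by (simp add: zero_less_mult_iff)
  qed
  have pw: "F u - m \<le> F u * ln (F u / m)" if "u \<in> A" for u
  proof (cases "F u = 0")
    case True then show ?thesis using m0 by simp
  next
    case False
    then have "0 < F u" using F0 that by (simp add: less_le)
    show ?thesis
    proof -
      have mp: "0 < m" using mpos .
      have "1 - 1 / (F u / m) \<le> ln (F u / m)" by (rule ln_ge_one_minus_inv) (use \<open>0 < F u\<close> mp in simp)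
      then have "F u * (1 - 1 / (F u / m)) \<le> F u * ln (F u / m)" using \<open>0 < F u\<close> by (simp add: mult_left_mono)
      moreover have "F u * (1 - 1 / (F u / m)) = F u - m" using \<open>0 < F u\<close> mp by (simp add: field_simps)
      ultimately show ?thesis by linarith
    qed
  qed
  have strict: "F z - m < F z * ln (F z / m)"
  proof -
    have fz: "0 < F z" using z m0 by simp
    show ?thesis
    proof (cases "m = 0")
      case True then show ?thesis using mpos by simp
    next
      case False
      then have mp: "0 < m" using m0 by simp
      have "1 - 1 / (F z / m) < ln (F z / m)" by (rule ln_gt_one_minus_inv) (use fz mp z in auto)
      then have "F z * (1 - 1 / (F z / m)) < F z * ln (F z / m)" using fz by simp
      moreover have "F z * (1 - 1 / (F z / m)) = F z - m" using fz mp by (simp add: field_simps)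
      ultimately show ?thesis by linarith
    qed
  qed
  have "(\<Sum>u\<in>A. F u - m) < (\<Sum>u\<in>A. F u * ln (F u / m))"
    by (rule sum_strict_mono_ex1[OF fin]) (use pw z strict in auto)
  moreover have "(\<Sum>u\<in>A. F u - m) = 0" using sumF by (simp add: sum_subtractf)
  ultimately show ?thesis unfolding ent_def m_def using cA by simp
qed

lemma ent_convex:
  fixes H :: "'a \<Rightarrow> 'b \<Rightarrow> real"
  assumes finY: "finite Y" and finU: "finite U" and Une: "U \<noteq> {}"
    and H0: "\<And>y u. y \<in> Y \<Longrightarrow> u \<in> U \<Longrightarrow> 0 \<le> H y u"
  shows "ent Y (\<lambda>y. avg U (H y)) \<le> avg U (\<lambda>u. ent Y (\<lambda>y. H y u))"
proof (cases "Y = {}")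
  case True then show ?thesis by (simp add: ent_def avg_def)
next
  case False
  have cY: "0 < real (card Y)" using False finY by (simp add: card_gt_0_iff)
  have cU: "0 < real (card U)" using Une finU by (simp add: card_gt_0_iff)
  define G where "G y = avg U (H y)" for y
  define mu where "mu u = avg Y (\<lambda>y. H y u)" for u
  have Gbar: "avg Y G = avg U mu"
    unfolding G_def mu_def avg_def
    by (simp add: sum_divide_distrib[symmetric] sum.swap[of _ Y U])
  have mu0: "0 \<le> mu u" if "u \<in> U" for u unfolding mu_def avg_def using H0 that by (simp add: sum_nonneg)
  have mupos: "0 < mu u" if "y \<in> Y" "u \<in> U" "0 < H y u" for y u
  proof -
    have "H y u \<le> (\<Sum>y\<in>Y. H y u)" by (rule member_le_sum) (use that H0 finY in auto)
    then show ?thesis unfolding mu_def avg_def using that cY by simp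
  qed
  have pw: "real (card U) * (G y * ln (G y / avg Y G)) \<le> (\<Sum>u\<in>U. H y u * ln (H y u / mu u))"
    if y: "y \<in> Y" for y
  proof -
    have "(\<Sum>u\<in>U. H y u) * ln ((\<Sum>u\<in>U. H y u) / (\<Sum>u\<in>U. mu u)) \<le> (\<Sum>u\<in>U. H y u * ln (H y u / mu u))"
      by (rule log_sum_ineq[OF finU]) (use H0 y mu0 mupos in auto)
    moreover have "(\<Sum>u\<in>U. H y u) = real (card U) * G y" unfolding G_def avg_def using cU by simp
    moreover have "(\<Sum>u\<in>U. mu u) = real (card U) * avg Y G" using Gbar cU unfolding avg_def by (simp add: field_simps)
    ultimately show ?thesis using cU by simp
  qed
  have "real (card U) * (\<Sum>y\<in>Y. G y * ln (G y / avg Y G)) \<le> (\<Sum>y\<in>Y. \<Sum>u\<in>U. H y u * ln (H y u / mu u))"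
    unfolding sum_distrib_left by (rule sum_mono) (use pw in auto)
  also have "\<dots> = (\<Sum>u\<in>U. \<Sum>y\<in>Y. H y u * ln (H y u / mu u))" by (rule sum.swap)
  also have "\<dots> = real (card Y) * (\<Sum>u\<in>U. ent Y (\<lambda>y. H y u))"
    unfolding ent_def mu_def sum_distrib_left using cY by simp
  finally have "real (card U) * (\<Sum>y\<in>Y. G y * ln (G y / avg Y G)) \<le> real (card Y) * (\<Sum>u\<in>U. ent Y (\<lambda>y. H y u))" .
  then have "(\<Sum>y\<in>Y. G y * ln (G y / avg Y G)) / real (card Y) \<le> (\<Sum>u\<in>U. ent Y (\<lambda>y. H y u)) / real (card U)"
    using cU cY by (simp add: field_simps)
  then have "ent Y G \<le> avg U (\<lambda>u. ent Y (\<lambda>y. H y u))" unfolding ent_def[of Y G] avg_def[of U] .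
  then show ?thesis unfolding G_def .
qed

lemma mul_ln_split:
  fixes a b c :: real
  assumes "0 \<le> a" "0 < a \<Longrightarrow> 0 < b" "0 < a \<Longrightarrow> 0 < c"
  shows "a * ln (a / c) = a * ln (a / b) + a * ln (b / c)"
proof (cases "a = 0")
  case True then show ?thesis by simp
next
  case False
  then have "0 < a" "0 < b" "0 < c" using assms by auto
  then show ?thesis by (simp add: ln_div algebra_simps)
qed

lemma avg_pos:
  assumes "finite A" "\<And>x. x \<in> A \<Longrightarrow> 0 \<le> F x" "x \<in> A" "0 < F x"
  shows "0 < avg A F"
proof -
  have "F x \<le> (\<Sum>x\<in>A. F x)" by (rule member_le_sum) (use assms in auto)
  moreover have "0 < real (card A)" using assms by (auto simp: card_gt_0_iff)
  ultimately show ?thesis unfolding avg_def using assms by simp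
qed

lemma avg_nonneg: "(\<And>x. x \<in> A \<Longrightarrow> 0 \<le> F x) \<Longrightarrow> 0 \<le> avg A F"
  unfolding avg_def by (simp add: sum_nonneg)

lemma ent_product:
  fixes H :: "'a \<Rightarrow> 'b \<Rightarrow> real"
  assumes finY: "finite Y" and finU: "finite U" and Yne: "Y \<noteq> {}" and Une: "U \<noteq> {}"
    and H0: "\<And>y u. y \<in> Y \<Longrightarrow> u \<in> U \<Longrightarrow> 0 \<le> H y u"
  shows "ent (Y \<times> U) (\<lambda>(y,u). H y u) \<le> avg U (\<lambda>u. ent Y (\<lambda>y. H y u)) + avg Y (\<lambda>y. ent U (H y))"
proof -
  have cY: "0 < real (card Y)" using Yne finY by (simp add: card_gt_0_iff)
  have cU: "0 < real (card U)" using Une finU by (simp add: card_gt_0_iff)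
  define G where "G y = avg U (H y)" for y
  define Hb where "Hb = avg (Y \<times> U) (\<lambda>(y,u). H y u)"
  have HbG: "Hb = avg Y G"
    unfolding Hb_def G_def avg_def card_cartesian_product
    by (simp add: sum_divide_distrib[symmetric] sum.cartesian_product[symmetric] mult.commute)
  have G0: "\<And>y. y \<in> Y \<Longrightarrow> 0 \<le> G y" unfolding G_def by (rule avg_nonneg) (use H0 in auto)
  have Gpos: "0 < G y" if "y \<in> Y" "u \<in> U" "0 < H y u" for y u
    unfolding G_def by (rule avg_pos[OF finU]) (use H0 that in auto)
  have Hbpos: "0 < Hb" if "y \<in> Y" "u \<in> U" "0 < H y u" for y u
    unfolding HbG by (rule avg_pos[OF finY G0]) (use Gpos that in auto)
  have pw: "H y u * ln (H y u / Hb) = H y u * ln (H y u / G y) + H y u * ln (G y / Hb)"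
    if "y \<in> Y" "u \<in> U" for y u
    by (rule mul_ln_split) (use H0 Gpos Hbpos that in auto)
  have "(\<Sum>p\<in>Y \<times> U. (\<lambda>(y,u). H y u) p * ln ((\<lambda>(y,u). H y u) p / Hb))
      = (\<Sum>y\<in>Y. \<Sum>u\<in>U. H y u * ln (H y u / Hb))"
    by (simp add: sum.cartesian_product case_prod_beta')
  also have "\<dots> = (\<Sum>y\<in>Y. (\<Sum>u\<in>U. H y u * ln (H y u / G y)) + (\<Sum>u\<in>U. H y u * ln (G y / Hb)))"
    by (rule sum.cong) (auto simp: pw sum.distrib)
  also have "\<dots> = (\<Sum>y\<in>Y. real (card U) * ent U (H y) + real (card U) * (G y * ln (G y / Hb)))"
  proof (rule sum.cong)
    fix y assume "y \<in> Y"
    have "(\<Sum>u\<in>U. H y u * ln (G y / Hb)) = (\<Sum>u\<in>U. H y u) * ln (G y / Hb)"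
      by (simp add: sum_distrib_right)
    also have "(\<Sum>u\<in>U. H y u) = real (card U) * G y" unfolding G_def avg_def using cU by simp
    finally have "(\<Sum>u\<in>U. H y u * ln (G y / Hb)) = real (card U) * (G y * ln (G y / Hb))" by simp
    moreover have "(\<Sum>u\<in>U. H y u * ln (H y u / G y)) = real (card U) * ent U (H y)"
      unfolding ent_def G_def using cU by simp
    ultimately show "(\<Sum>u\<in>U. H y u * ln (H y u / G y)) + (\<Sum>u\<in>U. H y u * ln (G y / Hb))
      = real (card U) * ent U (H y) + real (card U) * (G y * ln (G y / Hb))" by simp
  qed simp
  also have "\<dots> = real (card U) * (\<Sum>y\<in>Y. ent U (H y)) + real (card U) * (real (card Y) * ent Y G)"
    unfolding sum.distrib sum_distrib_left[symmetric] ent_def HbG using cY by simp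
  finally have eq: "(\<Sum>p\<in>Y \<times> U. (\<lambda>(y,u). H y u) p * ln ((\<lambda>(y,u). H y u) p / Hb))
      = real (card U) * (\<Sum>y\<in>Y. ent U (H y)) + real (card U) * (real (card Y) * ent Y G)" .
  have e1: "ent (Y \<times> U) (\<lambda>(y,u). H y u) = (\<Sum>p\<in>Y \<times> U. (\<lambda>(y,u). H y u) p * ln ((\<lambda>(y,u). H y u) p / Hb)) / (real (card Y) * real (card U))"
    unfolding ent_def[of "Y \<times> U"] Hb_def card_cartesian_product by simp
  have "ent (Y \<times> U) (\<lambda>(y,u). H y u) = avg Y (\<lambda>y. ent U (H y)) + ent Y G"
    unfolding e1 eq avg_def
    using cY cU by (simp add: field_simps)
  moreover have "ent Y G \<le> avg U (\<lambda>u. ent Y (\<lambda>y. H y u))"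
    unfolding G_def by (rule ent_convex[OF finY finU Une H0])
  ultimately show ?thesis by simp
qed

lemma ent_image:
  assumes "inj_on h S"
  shows "ent (h ` S) F = ent S (F \<circ> h)" "avg (h ` S) F = avg S (F \<circ> h)"
proof -
  show "avg (h ` S) F = avg S (F \<circ> h)" unfolding avg_def using assms
    by (simp add: sum.reindex card_image)
  then show "ent (h ` S) F = ent S (F \<circ> h)" unfolding ent_def using assms
    by (simp add: sum.reindex card_image)
qed


lemma F1: assumes "0 < (u::real)" "u \<le> 1" shows "(u - 1/u)/2 \<le> ln u"
proof -
  define h where "h x = ln x - (x - 1/x)/2" for x :: real
  have "h 1 \<le> h u"
  proof (rule DERIV_nonpos_imp_decreasing_open[of u 1 h])
    show "u \<le> 1" by fact
    fix x assume x: "u < x" "x < 1"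
    then have x0: "0 < x" using assms by simp
    have "(h has_real_derivative (1/x - (1 + 1/x^2)/2)) (at x)"
      unfolding h_def using x0
      by (auto intro!: derivative_eq_intros simp: field_simps power2_eq_square)
    moreover have "1/x - (1 + 1/x^2)/2 \<le> 0"
    proof -
      have "1/x - (1 + 1/x^2)/2 = - ((x - 1)^2 / (2 * x^2))" using x0
        by (simp add: field_simps power2_eq_square)
      also have "\<dots> \<le> 0" by simp
      finally show ?thesis .
    qed
    ultimately show "\<exists>y. (h has_real_derivative y) (at x) \<and> y \<le> 0" by blast
  next
    show "continuous_on {u..1} h" unfolding h_def using assms
      by (intro continuous_intros) auto
  qed
  then show ?thesis unfolding h_def by simp
qed

lemma F2: assumes "0 < (u::real)" "u \<le> 1" shows "ln u \<le> (u - 1) - (u - 1)^2/2"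
proof -
  define h where "h x = (x - 1) - (x - 1)^2/2 - ln x" for x :: real
  have "h 1 \<le> h u"
  proof (rule DERIV_nonpos_imp_decreasing_open[of u 1 h])
    show "u \<le> 1" by fact
    fix x assume x: "u < x" "x < 1"
    then have x0: "0 < x" using assms by simp
    have "(h has_real_derivative (1 - (x - 1) - 1/x)) (at x)"
      unfolding h_def using x0
      by (auto intro!: derivative_eq_intros simp: field_simps power2_eq_square)
    moreover have "1 - (x - 1) - 1/x \<le> 0"
    proof -
      have "1 - (x - 1) - 1/x = - ((x - 1)^2 / x)" using x0
        by (simp add: field_simps power2_eq_square)
      also have "\<dots> \<le> 0" using x0 by simp
      finally show ?thesis .
    qed
    ultimately show "\<exists>y. (h has_real_derivative y) (at x) \<and> y \<le> 0" by blast
  next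
    show "continuous_on {u..1} h" unfolding h_def using assms
      by (intro continuous_intros) auto
  qed
  then show ?thesis unfolding h_def by simp
qed

definition psi :: "real \<Rightarrow> real \<Rightarrow> real" where
  "psi a c = a * ln (a / c) - a + c"

lemma psi_nonneg: assumes "0 \<le> a" "0 < c" shows "0 \<le> psi a c"
proof (cases "a = 0")
  case True then show ?thesis using assms by (simp add: psi_def)
next
  case False
  then have a: "0 < a" using assms by simp
  have "1 - 1 / (a / c) \<le> ln (a / c)" by (rule ln_ge_one_minus_inv) (use a assms in simp)
  then have "a * (1 - 1 / (a / c)) \<le> a * ln (a / c)" using a by (simp add: mult_left_mono)
  moreover have "a * (1 - 1 / (a / c)) = a - c" using a assms by (simp add: field_simps)
  ultimately show ?thesis unfolding psi_def by simp
qed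

lemma psi_P1: assumes "c \<le> a" "0 < c" shows "(a - c)^2 \<le> 2 * a * psi a c"
proof -
  have a: "0 < a" using assms by simp
  define u where "u = c / a"
  have u0: "0 < u" "u \<le> 1" unfolding u_def using assms a by auto
  have "ln u \<le> (u - 1) - (u - 1)^2/2" by (rule F2[OF u0])
  moreover have "ln (a / c) = - ln u" unfolding u_def using a assms by (simp add: ln_div)
  ultimately have "(1 - u) + (1 - u)^2/2 \<le> ln (a / c)" by (simp add: power2_commute)
  then have "a * ((1 - u) + (1 - u)^2/2) \<le> a * ln (a / c)" using a by (simp add: mult_left_mono)
  moreover have "a * (1 - u) = a - c" unfolding u_def using a by (simp add: field_simps)
  moreover have "a * (1 - u)^2 = (a - c)^2 / a" unfolding u_def using a
    by (simp add: field_simps power2_eq_square)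
  ultimately have "(a - c) + (a - c)^2 / (2 * a) \<le> a * ln (a / c)"
    by (simp add: algebra_simps)
  then have "(a - c)^2 / (2 * a) \<le> psi a c" unfolding psi_def by simp
  then show ?thesis using a by (simp add: field_simps)
qed

lemma psi_P2: assumes "0 \<le> a" "a \<le> c" "0 < c" shows "(c - a)^2 \<le> 2 * c * psi a c"
proof (cases "a = 0")
  case True then show ?thesis using assms by (simp add: psi_def power2_eq_square)
next
  case False
  then have a: "0 < a" using assms by simp
  define t where "t = a / c"
  have t0: "0 < t" "t \<le> 1" unfolding t_def using assms a by auto
  have "(t - 1/t)/2 \<le> ln t" by (rule F1[OF t0])
  then have "c * t * ((t - 1/t)/2) \<le> c * t * ln t" using t0 assms by (simp add: mult_left_mono)
  moreover have "c * t * ((t - 1/t)/2) = c * (t^2 - 1) / 2" using t0 by (simp add: field_simps power2_eq_square)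
  moreover have "c * t = a" unfolding t_def using assms by simp
  ultimately have "c * (t^2 - 1) / 2 \<le> a * ln (a / c)" unfolding t_def by simp
  then have "c * (t^2 - 1) / 2 - a + c \<le> psi a c" unfolding psi_def by simp
  moreover have "c * (t^2 - 1) / 2 - a + c = (c - a)^2 / (2 * c)" unfolding t_def using assms
    by (simp add: field_simps power2_eq_square)
  ultimately have X: "(c - a)^2 / (2 * c) \<le> psi a c" by simp
  have "(c - a)^2 = 2 * c * ((c - a)^2 / (2 * c))" using assms by simp
  also have "\<dots> \<le> 2 * c * psi a c" by (rule mult_left_mono[OF X]) (use assms in simp)
  finally show ?thesis .
qed

lemma eps_ln_bound: assumes "0 < (e::real)" "e \<le> 1" shows "e * ln (1/e) \<le> 2 * sqrt e"
proof -
  have s: "0 < sqrt e" using assms by simp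
  have "ln (1/e) = 2 * ln (1 / sqrt e)" using assms
    by (simp add: ln_div ln_sqrt)
  also have "\<dots> \<le> 2 * (1 / sqrt e - 1)" using ln_le_minus_one[of "1/sqrt e"] s by simp
  also have "\<dots> \<le> 2 / sqrt e" by simp
  finally have L: "ln (1/e) \<le> 2 / sqrt e" .
  have "e * ln (1/e) \<le> e * (2 / sqrt e)" by (rule mult_left_mono[OF L]) (use assms in simp)
  also have "e * (2 / sqrt e) = 2 * (e / sqrt e)" by simp
  also have "e / sqrt e = sqrt e" using assms by (simp add: real_div_sqrt)
  finally show ?thesis .
qed

lemma mul_ln_le_lin: assumes "0 \<le> (a::real)" "0 < b" shows "a * ln (a / b) \<le> a * (a / b - 1)"
proof (cases "a = 0")
  case True then show ?thesis by simp
next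
  case False
  then have "0 < a" using assms by simp
  then show ?thesis using ln_le_minus_one[of "a/b"] assms by (simp add: mult_left_mono)
qed

lemma tp_eps:
  fixes e a c :: real
  assumes e0: "0 \<le> e" and e1: "e \<le> 1/2" and a0: "0 \<le> a" and c0: "0 < c"
  shows "(1-e)*a*ln(a/((1-e)*a + e*c)) + e*c*ln(c/((1-e)*a + e*c)) \<le> 32*sqrt e*(1-e)*psi a c"
proof -
  define ab where "ab = (1-e)*a + e*c"
  have ps: "0 \<le> psi a c" by (rule psi_nonneg[OF a0 c0])
  have se: "e \<le> sqrt e"
  proof -
    have s1: "sqrt e \<le> 1" using e1 by simp
    have "e = sqrt e * sqrt e" using e0 by simp
    also have "\<dots> \<le> sqrt e * 1" by (rule mult_left_mono[OF s1]) (use e0 in simp)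
    finally show ?thesis by simp
  qed
  have chi: "(1-e)*a*ln(a/ab) + e*c*ln(c/ab) \<le> e*(1-e)*(a-c)^2/ab" if abp: "0 < ab"
  proof -
    have "(1-e)*(a*ln(a/ab)) \<le> (1-e)*(a*(a/ab - 1))"
      by (rule mult_left_mono[OF mul_ln_le_lin[OF a0 abp]]) (use e1 in simp)
    moreover have "e*(c*ln(c/ab)) \<le> e*(c*(c/ab - 1))"
      by (rule mult_left_mono[OF mul_ln_le_lin[OF _ abp]]) (use c0 e0 in simp_all)
    moreover have "(1-e)*(a*(a/ab - 1)) + e*(c*(c/ab - 1)) = e*(1-e)*(a-c)^2/ab"
    proof -
      have "(1-e)*(a*(a/ab - 1)) + e*(c*(c/ab - 1)) = ((1-e)*a^2 + e*c^2 - ab*((1-e)*a + e*c))/ab"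
        using abp by (simp add: field_simps power2_eq_square)
      also have "(1-e)*a^2 + e*c^2 - ab*((1-e)*a + e*c) = e*(1-e)*(a-c)^2"
        unfolding ab_def by (simp add: algebra_simps power2_eq_square)
      finally show ?thesis .
    qed
    ultimately show ?thesis by (simp add: mult.assoc)
  qed
  consider "c \<le> a" | "c/2 \<le> a \<and> a < c" | "a < c/2" by linarith
  then have "(1-e)*a*ln(a/ab) + e*c*ln(c/ab) \<le> 32*sqrt e*(1-e)*psi a c"
  proof cases
    case 1
    have ap: "0 < a" using 1 c0 by simp
    have abge: "(1-e)*a \<le> ab" unfolding ab_def using e0 c0 by simp
    have "0 < (1-e)*a" using ap e1 by simp
    then have abp: "0 < ab" using abge by linarith
    have P: "(a - c)^2 \<le> 2 * a * psi a c" by (rule psi_P1[OF 1 c0])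
    have "e*(1-e)*(a-c)^2/ab \<le> e*(1-e)*(2*a*psi a c)/ab"
      using P e0 e1 abp by (simp add: divide_right_mono mult_left_mono)
    also have "\<dots> \<le> e*(1-e)*(2*a*psi a c)/((1-e)*a)"
      by (rule divide_left_mono[OF abge]) (use e0 e1 ap ps abp in simp_all)
    also have "\<dots> = 2*e*psi a c" using e1 ap by (simp add: field_simps)
    also have "\<dots> \<le> 32*sqrt e*(1-e)*psi a c"
    proof -
      have "0 \<le> 16*sqrt e*(1-2*e)" using e1 e0 by simp
      then have "16*sqrt e \<le> 32*sqrt e*(1-e)" by (simp add: algebra_simps)
      then have "2*e \<le> 32*sqrt e*(1-e)" using se e0 by linarith
      then show ?thesis using ps by (simp add: mult_right_mono)
    qed
    finally show ?thesis using chi[OF abp] by linarith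
  next
    case 2
    have ap: "0 < a" using 2 c0 by simp
    have abge: "c/4 \<le> ab"
    proof -
      have "a/2 \<le> (1-e)*a" using e1 ap by (simp add: field_simps)
      moreover have "0 \<le> e*c" using e0 c0 by simp
      ultimately show ?thesis unfolding ab_def using 2 by linarith
    qed
    have abp: "0 < ab" using abge c0 by simp
    have P: "(a - c)^2 \<le> 2 * c * psi a c" using psi_P2[OF a0 _ c0] 2 by (simp add: power2_commute)
    have "e*(1-e)*(a-c)^2/ab \<le> e*(1-e)*(2*c*psi a c)/ab"
      using P e0 e1 abp by (simp add: divide_right_mono mult_left_mono)
    also have "\<dots> \<le> e*(1-e)*(2*c*psi a c)/(c/4)"
      by (rule divide_left_mono[OF abge]) (use e0 e1 c0 ps abp in simp_all)
    also have "\<dots> = 8*e*(1-e)*psi a c" using c0 by (simp add: field_simps)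
    also have "\<dots> \<le> 32*sqrt e*(1-e)*psi a c"
    proof -
      have "8*e*(1-e) \<le> 32*sqrt e*(1-e)" using se e1 e0 by (intro mult_right_mono) auto
      then show ?thesis using ps by (simp add: mult_right_mono)
    qed
    finally show ?thesis using chi[OF abp] by linarith
  next
    case 3
    have t1: "(1-e)*a*ln(a/ab) \<le> 0"
    proof (cases "a = 0")
      case True then show ?thesis by simp
    next
      case False
      then have ap: "0 < a" using a0 by simp
      have "0 \<le> e*(c - a)" using 3 e0 a0 by (intro mult_nonneg_nonneg) auto
      then have "a \<le> ab" unfolding ab_def by (simp add: algebra_simps)
      then have "a / ab \<le> 1" using ap by simp
      then have "ln (a/ab) \<le> 0" using ap \<open>a \<le> ab\<close> by simp
      then show ?thesis using ap e1 by (simp add: mult_nonneg_nonpos)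
    qed
    have psic: "c/8 \<le> psi a c"
    proof -
      have "a \<le> c" using 3 a0 by linarith
      then have P: "(c - a)^2 \<le> 2 * c * psi a c" using psi_P2[OF a0 _ c0] by simp
      have "(c/2)^2 \<le> (c - a)^2" using 3 a0 c0 by (intro power_mono) auto
      then have "c * (c/8) \<le> c * psi a c" using P by (simp add: power2_eq_square field_simps)
      then show ?thesis using c0 by simp
    qed
    have t2: "e*c*ln(c/ab) \<le> 2*sqrt e*c"
    proof (cases "e = 0")
      case True then show ?thesis by simp
    next
      case False
      then have ep: "0 < e" using e0 by simp
      have abge: "e*c \<le> ab" unfolding ab_def using a0 e1 by simp
      have "0 < e*c" using ep c0 by simp
      then have abp: "0 < ab" using abge by linarith
      have "c/ab \<le> 1/e" using abge ep c0 abp by (simp add: field_simps)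
      then have "ln (c/ab) \<le> ln (1/e)" using c0 abp ep by (subst ln_le_cancel_iff) auto
      then have "e*c*ln(c/ab) \<le> e*c*ln(1/e)" using ep c0 by simp
      also have "\<dots> = c * (e * ln (1/e))" by simp
      also have "\<dots> \<le> c * (2 * sqrt e)" using eps_ln_bound[OF ep] e1 c0 by simp
      finally show ?thesis by (simp add: mult.commute mult.left_commute)
    qed
    have "2*sqrt e*c \<le> 32*sqrt e*(1-e)*psi a c"
    proof -
      have "2*sqrt e*c = 16*sqrt e*(c/8)" by simp
      also have "\<dots> \<le> 16*sqrt e*psi a c" by (rule mult_left_mono[OF psic]) (use e0 in simp)
      also have "\<dots> \<le> 32*sqrt e*(1-e)*psi a c"
      proof -
        have "0 \<le> 16*sqrt e*(1-2*e)" using e1 e0 by simp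
        then have "16*sqrt e \<le> 32*sqrt e*(1-e)" by (simp add: algebra_simps)
        then show ?thesis using ps by (simp add: mult_right_mono)
      qed
      finally show ?thesis .
    qed
    then show ?thesis using t1 t2 by linarith
  qed
  then show ?thesis unfolding ab_def .
qed

lemma tp_ab:
  fixes al be a c :: real
  assumes al: "0 < al" and be: "0 \<le> be" "be \<le> al" and a0: "0 \<le> a" and c0: "0 < c"
  shows "al*a*ln(a/((al*a+be*c)/(al+be))) + be*c*ln(c/((al*a+be*c)/(al+be)))
     \<le> 32*sqrt(be/(al+be))*al*psi a c"
proof -
  define e where "e = be/(al+be)"
  have s: "0 < al + be" using al be by simp
  have e0: "0 \<le> e" unfolding e_def using s be by simp
  have e1: "e \<le> 1/2" unfolding e_def using s be by (simp add: field_simps)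
  have om: "1 - e = al/(al+be)" unfolding e_def using s by (simp add: field_simps)
  have ab: "(al*a+be*c)/(al+be) = (1-e)*a + e*c" unfolding om unfolding e_def
    by (simp add: add_divide_distrib)
  have T: "(1-e)*a*ln(a/((1-e)*a + e*c)) + e*c*ln(c/((1-e)*a + e*c)) \<le> 32*sqrt e*(1-e)*psi a c"
    by (rule tp_eps[OF e0 e1 a0 c0])
  have "(al+be) * ((1-e)*a*ln(a/((1-e)*a + e*c)) + e*c*ln(c/((1-e)*a + e*c))) \<le> (al+be) * (32*sqrt e*(1-e)*psi a c)"
    by (rule mult_left_mono[OF T]) (use s in simp)
  moreover have "(al+be) * ((1-e)*a*ln(a/((1-e)*a + e*c)) + e*c*ln(c/((1-e)*a + e*c)))
     = al*a*ln(a/((al*a+be*c)/(al+be))) + be*c*ln(c/((al*a+be*c)/(al+be)))"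
  proof -
    have k1: "(al+be)*(1-e) = al" unfolding om using s by simp
    have k2: "(al+be)*e = be" unfolding e_def using s by simp
    have "(al+be) * ((1-e)*a*ln(a/((1-e)*a + e*c)) + e*c*ln(c/((1-e)*a + e*c)))
       = ((al+be)*(1-e))*a*ln(a/((1-e)*a + e*c)) + ((al+be)*e)*c*ln(c/((1-e)*a + e*c))"
      by (simp add: algebra_simps)
    then show ?thesis unfolding k1 k2 ab[symmetric] .
  qed
  moreover have "(al+be) * (32*sqrt e*(1-e)*psi a c) = 32*sqrt(be/(al+be))*al*psi a c"
    unfolding om e_def using s by (simp add: field_simps)
  ultimately show ?thesis by simp
qed

lemma phi_bound:
  fixes t T :: real
  assumes t0: "0 \<le> t" and tT: "t \<le> T" and T1: "1 \<le> T"
  shows "t^2 * ln (t^2) - t^2 + 1 \<le> (3 + 2 * ln T) * (t - 1)^2"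
proof -
  have lT: "0 \<le> ln T" using T1 by simp
  have sq0: "0 \<le> (t - 1)^2" by simp
  consider "t = 0" | "0 < t \<and> t \<le> 1" | "1 < t" using t0 by linarith
  then show ?thesis
  proof cases
    case 1 then show ?thesis using lT by simp
  next
    case 2
    then have tp: "0 < t" by simp
    have "ln (t^2) = 2 * ln t" using tp by (simp add: ln_realpow)
    have "t^2 * ln (t^2) = 2 * t^2 * ln t" using tp by (simp add: ln_realpow)
    also have "\<dots> \<le> 2 * t^2 * (t - 1)" using ln_le_minus_one[OF tp] by (simp add: mult_left_mono)
    finally have "t^2 * ln (t^2) - t^2 + 1 \<le> 2 * t^2 * (t - 1) - t^2 + 1" by simp
    also have "\<dots> = (t - 1)^2 * (2*t + 1)" by (simp add: algebra_simps power2_eq_square power3_eq_cube)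
    also have "\<dots> \<le> (t - 1)^2 * 3" using 2 by (intro mult_left_mono) auto
    also have "\<dots> \<le> (3 + 2 * ln T) * (t - 1)^2"
    proof -
      have "3 \<le> 3 + 2 * ln T" using lT by simp
      from mult_right_mono[OF this sq0] show ?thesis by (simp add: mult.commute)
    qed
    finally show ?thesis .
  next
    case 3
    then have tp: "0 < t" by simp
    have u: "0 < 1/t" "1/t \<le> 1" using 3 by auto
    have "(1/t - t)/2 \<le> ln (1/t)" using F1[OF u] by simp
    then have A: "2 * t * ln t \<le> t^2 - 1" using tp by (simp add: ln_div field_simps power2_eq_square)
    have B: "t * ln t \<le> (t - 1) * (1 + ln t)" using ln_le_minus_one[OF tp] by (simp add: algebra_simps)
    have lt: "ln t \<le> ln T" using tp tT by simp
    have l2: "ln (t^2) = 2 * ln t" using tp by (simp add: ln_realpow)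
    have "t^2 * ln (t^2) - t^2 + 1 = 2*(t^2 - t) * ln t + (2 * t * ln t - t^2 + 1)"
      unfolding l2 by (simp add: algebra_simps)
    also have "\<dots> \<le> 2*(t^2 - t) * ln t" using A by simp
    also have "\<dots> = 2 * (t - 1) * (t * ln t)" by (simp add: algebra_simps power2_eq_square)
    also have "\<dots> \<le> 2 * (t - 1) * ((t - 1) * (1 + ln t))" using B 3 by (intro mult_left_mono) auto
    also have "\<dots> = (2 + 2 * ln t) * (t - 1)^2" by (simp add: algebra_simps power2_eq_square)
    also have "\<dots> \<le> (3 + 2 * ln T) * (t - 1)^2" using lt sq0 by (intro mult_right_mono) auto
    finally show ?thesis .
  qed
qed

lemma var_formula:
  assumes "finite Q" "Q \<noteq> {}"
  shows "var Q g = avg Q (\<lambda>x. (g x)^2) - (avg Q g)^2"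
proof -
  have n: "0 < real (card Q)" using assms by (simp add: card_gt_0_iff)
  have "(\<Sum>y\<in>Q. \<Sum>z\<in>Q. (g y - g z)^2) = (\<Sum>y\<in>Q. \<Sum>z\<in>Q. (g y)^2 + (g z)^2 - 2 * g y * g z)"
    by (simp add: power2_diff)
  also have "\<dots> = (\<Sum>y\<in>Q. \<Sum>z\<in>Q. (g y)^2) + (\<Sum>y\<in>Q. \<Sum>z\<in>Q. (g z)^2) - 2 * (\<Sum>y\<in>Q. \<Sum>z\<in>Q. g y * g z)"
    by (simp add: sum.distrib sum_subtractf sum_distrib_left mult.assoc)
  also have "(\<Sum>y\<in>Q. \<Sum>z\<in>Q. (g y)^2) = real (card Q) * (\<Sum>y\<in>Q. (g y)^2)"
    by (simp add: sum_distrib_left mult.commute)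
  also have "(\<Sum>y\<in>Q. \<Sum>z\<in>Q. (g z)^2) = real (card Q) * (\<Sum>y\<in>Q. (g y)^2)"
    by simp
  also have "(\<Sum>y\<in>Q. \<Sum>z\<in>Q. g y * g z) = (\<Sum>y\<in>Q. g y)^2"
    by (simp add: power2_eq_square sum_product)
  finally show ?thesis unfolding var_def avg_def using n
    by (simp add: field_simps power2_eq_square)
qed

lemma var_nonneg: "0 \<le> var Q g"
  unfolding var_def by (simp add: sum_nonneg)

lemma local_LS:
  assumes finQ: "finite Q" and Qne: "Q \<noteq> {}" and f0: "\<And>x. x \<in> Q \<Longrightarrow> 0 \<le> f x"
  shows "ent Q f \<le> (6 + 2 * ln (real (card Q))) * var Q (\<lambda>x. sqrt (f x))"
proof -
  define n where "n = real (card Q)"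
  have n1: "1 \<le> n" unfolding n_def using finQ Qne by (simp add: card_gt_0_iff Suc_le_eq)
  have ln0: "0 \<le> ln n" using n1 by simp
  define s where "s = avg Q f"
  define g where "g x = sqrt (f x)" for x
  define mu where "mu = avg Q g"
  have s0: "0 \<le> s" unfolding s_def by (rule avg_nonneg) (use f0 in auto)
  have sumf: "(\<Sum>x\<in>Q. f x) = n * s" unfolding s_def n_def avg_def using n1 n_def by simp
  have vnn: "0 \<le> var Q (\<lambda>x. sqrt (f x))" by (rule var_nonneg)
  show ?thesis
  proof (cases "s = 0")
    case True
    then have "(\<Sum>x\<in>Q. f x) = 0" using sumf by simp
    then have "\<forall>x\<in>Q. f x = 0" using sum_nonneg_eq_0_iff[OF finQ] f0 by blast
    then have "ent Q f = 0" unfolding ent_def by simp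
    moreover have "0 \<le> (6 + 2 * ln (real (card Q))) * var Q (\<lambda>x. sqrt (f x))"
      using ln0 vnn unfolding n_def by simp
    ultimately show ?thesis by simp
  next
    case False
    then have sp: "0 < s" using s0 by simp
    define K where "K = 3 + ln n"
    have pw: "f x * ln (f x / s) - f x + s \<le> K * (g x - sqrt s)^2" if x: "x \<in> Q" for x
    proof -
      define t where "t = g x / sqrt s"
      have ss: "0 < sqrt s" using sp by simp
      have t0: "0 \<le> t" unfolding t_def g_def using f0[OF x] s0 by (simp add: divide_nonneg_nonneg)
      have t2: "t^2 = f x / s" unfolding t_def g_def using f0[OF x] sp by (simp add: power_divide)
      have fle: "f x \<le> n * s" unfolding sumf[symmetric] by (rule member_le_sum) (use x f0 finQ in auto)
      have "t^2 \<le> n" unfolding t2 using fle sp by (simp add: field_simps)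
      then have tT: "t \<le> sqrt n" using t0 by (simp add: real_le_rsqrt)
      have T1: "1 \<le> sqrt n" using n1 by simp
      have P: "t^2 * ln (t^2) - t^2 + 1 \<le> (3 + 2 * ln (sqrt n)) * (t - 1)^2" by (rule phi_bound[OF t0 tT T1])
      have lsq: "2 * ln (sqrt n) = ln n" using n1 by (simp add: ln_sqrt)
      have "s * (t^2 * ln (t^2) - t^2 + 1) \<le> s * (K * (t - 1)^2)"
        using P unfolding K_def lsq by (intro mult_left_mono) (use s0 in auto)
      moreover have "s * (t^2 * ln (t^2) - t^2 + 1) = f x * ln (f x / s) - f x + s"
        unfolding t2 using sp by (simp add: field_simps)
      moreover have "s * (t - 1)^2 = (g x - sqrt s)^2"
      proof -
        have "g x = sqrt s * t" unfolding t_def using ss by simp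
        then have "(g x - sqrt s)^2 = (sqrt s)^2 * (t - 1)^2" by (simp add: power2_eq_square algebra_simps)
        then show ?thesis using s0 by simp
      qed
      ultimately show ?thesis by (simp add: algebra_simps)
    qed
    have "(\<Sum>x\<in>Q. f x * ln (f x / s) - f x + s) \<le> (\<Sum>x\<in>Q. K * (g x - sqrt s)^2)"
      by (rule sum_mono) (use pw in auto)
    moreover have "(\<Sum>x\<in>Q. f x * ln (f x / s) - f x + s) = (\<Sum>x\<in>Q. f x * ln (f x / s))"
      using sumf unfolding n_def by (simp add: sum.distrib sum_subtractf)
    moreover have "(\<Sum>x\<in>Q. K * (g x - sqrt s)^2) = K * n * (2 * s - 2 * sqrt s * mu)"
    proof -
      have gg: "(g x)^2 = f x" if "x \<in> Q" for x unfolding g_def using f0[OF that] by simp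
      have "(\<Sum>x\<in>Q. (g x - sqrt s)^2) = (\<Sum>x\<in>Q. (g x)^2 - 2 * sqrt s * g x + s)"
        using s0 by (simp add: power2_diff algebra_simps)
      also have "\<dots> = (\<Sum>x\<in>Q. f x) - 2 * sqrt s * (\<Sum>x\<in>Q. g x) + n * s"
        using gg unfolding n_def by (simp add: sum.distrib sum_subtractf sum_distrib_left)
      also have "(\<Sum>x\<in>Q. g x) = n * mu" unfolding mu_def avg_def n_def using n1 n_def by simp
      finally have "(\<Sum>x\<in>Q. (g x - sqrt s)^2) = n * (2 * s - 2 * sqrt s * mu)"
        unfolding sumf by (simp add: algebra_simps)
      then show ?thesis by (simp add: sum_distrib_left[symmetric])
    qed
    ultimately have S: "(\<Sum>x\<in>Q. f x * ln (f x / s)) \<le> K * n * (2 * s - 2 * sqrt s * mu)" by simp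
    have V: "var Q g = s - mu^2"
    proof -
      have "var Q g = avg Q (\<lambda>x. (g x)^2) - mu^2" unfolding mu_def by (rule var_formula[OF finQ Qne])
      moreover have "avg Q (\<lambda>x. (g x)^2) = s"
      proof -
        have "(\<Sum>x\<in>Q. (g x)^2) = (\<Sum>x\<in>Q. f x)" by (rule sum.cong) (use f0 in \<open>auto simp: g_def\<close>)
        then show ?thesis unfolding s_def avg_def by simp
      qed
      ultimately show ?thesis by simp
    qed
    have mu0: "0 \<le> mu" unfolding mu_def by (rule avg_nonneg) (use f0 in \<open>simp add: g_def\<close>)
    have "mu^2 \<le> s" using V var_nonneg[of Q g] by simp
    then have mus: "mu \<le> sqrt s" using mu0 by (simp add: real_le_rsqrt)
    have "2 * s - 2 * sqrt s * mu \<le> 2 * (s - mu^2)"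
    proof -
      have "mu * mu \<le> sqrt s * mu" by (rule mult_right_mono[OF mus mu0])
      then show ?thesis by (simp add: power2_eq_square algebra_simps)
    qed
    then have "K * (2 * s - 2 * sqrt s * mu) \<le> K * (2 * (s - mu^2))"
      using ln0 unfolding K_def by (intro mult_left_mono) auto
    have "ent Q f = (\<Sum>x\<in>Q. f x * ln (f x / s)) / n" unfolding ent_def s_def n_def ..
    also have "\<dots> \<le> K * (2 * s - 2 * sqrt s * mu)" using S n1 by (simp add: field_simps)
    also have "\<dots> \<le> K * (2 * (s - mu^2))" by fact
    also have "\<dots> = (6 + 2 * ln (real (card Q))) * var Q (\<lambda>x. sqrt (f x))"
      unfolding V[unfolded g_def] K_def n_def by (simp add: algebra_simps)
    finally show ?thesis .
  qed
qed


lemma swap_cls: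
  assumes finA: "finite A" and refl: "\<And>x. x \<in> A \<Longrightarrow> x \<in> Q x" and sub: "\<And>x. x \<in> A \<Longrightarrow> Q x \<subseteq> A"
    and eq: "\<And>x y. x \<in> A \<Longrightarrow> y \<in> Q x \<Longrightarrow> Q y = Q x"
  shows "(\<Sum>x\<in>A. (\<Sum>y\<in>Q x. h y) / real (card (Q x))) = (\<Sum>x\<in>A. h x)"
proof -
  have finQ: "finite (Q x)" if "x \<in> A" for x using sub[OF that] finA by (rule finite_subset)
  have memb: "{x\<in>A. y \<in> Q x} = Q y" if y: "y \<in> A" for y
  proof
    show "{x\<in>A. y \<in> Q x} \<subseteq> Q y" using eq refl by blast
    show "Q y \<subseteq> {x\<in>A. y \<in> Q x}"
    proof
      fix x assume x: "x \<in> Q y"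
      then have "x \<in> A" using sub[OF y] by auto
      moreover have "Q x = Q y" using eq[OF y x] .
      ultimately show "x \<in> {x\<in>A. y \<in> Q x}" using refl[OF y] by auto
    qed
  qed
  have "(\<Sum>x\<in>A. (\<Sum>y\<in>Q x. h y) / real (card (Q x))) = (\<Sum>x\<in>A. \<Sum>y\<in>Q x. h y / real (card (Q y)))"
  proof (rule sum.cong)
    fix x assume x: "x \<in> A"
    have "(\<Sum>y\<in>Q x. h y) / real (card (Q x)) = (\<Sum>y\<in>Q x. h y / real (card (Q x)))"
      by (simp add: sum_divide_distrib)
    also have "\<dots> = (\<Sum>y\<in>Q x. h y / real (card (Q y)))"
      by (rule sum.cong) (use eq[OF x] in auto)
    finally show "(\<Sum>y\<in>Q x. h y) / real (card (Q x)) = (\<Sum>y\<in>Q x. h y / real (card (Q y)))" .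
  qed simp
  also have "\<dots> = (\<Sum>x\<in>A. \<Sum>y\<in>A. if y \<in> Q x then h y / real (card (Q y)) else 0)"
  proof (rule sum.cong)
    fix x assume x: "x \<in> A"
    show "(\<Sum>y\<in>Q x. h y / real (card (Q y))) = (\<Sum>y\<in>A. if y \<in> Q x then h y / real (card (Q y)) else 0)"
      using sum.inter_restrict[OF finA, of "\<lambda>y. h y / real (card (Q y))" "Q x"] sub[OF x]
      by (simp add: Int_absorb1 Int_commute)
  qed simp
  also have "\<dots> = (\<Sum>y\<in>A. \<Sum>x\<in>A. if y \<in> Q x then h y / real (card (Q y)) else 0)"
    by (rule sum.swap)
  also have "\<dots> = (\<Sum>y\<in>A. h y)"
  proof (rule sum.cong)
    fix y assume y: "y \<in> A"
    have "(\<Sum>x\<in>A. if y \<in> Q x then h y / real (card (Q y)) else 0)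
        = (\<Sum>x\<in>{x\<in>A. y \<in> Q x}. h y / real (card (Q y)))"
      using sum.inter_filter[OF finA, of "\<lambda>x. h y / real (card (Q y))" "\<lambda>x. y \<in> Q x"] by simp
    also have "\<dots> = real (card (Q y)) * (h y / real (card (Q y)))" unfolding memb[OF y] by simp
    also have "\<dots> = h y"
    proof -
      have "0 < card (Q y)" using finQ[OF y] refl[OF y] by (auto simp: card_gt_0_iff)
      then show ?thesis by simp
    qed
    finally show "(\<Sum>x\<in>A. if y \<in> Q x then h y / real (card (Q y)) else 0) = h y" .
  qed simp
  finally show ?thesis .
qed

lemma card_ent: "real (card A) * ent A F = (\<Sum>x\<in>A. F x * ln (F x / avg A F))"
  unfolding ent_def by (cases "card A = 0") (auto simp: card_eq_0_iff)

lemma sum_ln_part: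
  assumes finX: "finite X" and B: "B \<subseteq> X" and F0: "\<And>x. x \<in> X \<Longrightarrow> 0 \<le> F x"
  shows "(\<Sum>x\<in>B. F x * ln (F x / avg X F)) = (\<Sum>x\<in>B. F x * ln (F x / avg B F)) + (\<Sum>x\<in>B. F x) * ln (avg B F / avg X F)"
proof -
  have finB: "finite B" using B finX by (rule finite_subset)
  have "(\<Sum>x\<in>B. F x * ln (F x / avg X F)) = (\<Sum>x\<in>B. F x * ln (F x / avg B F) + F x * ln (avg B F / avg X F))"
  proof (rule sum.cong)
    fix x assume x: "x \<in> B"
    show "F x * ln (F x / avg X F) = F x * ln (F x / avg B F) + F x * ln (avg B F / avg X F)"
      by (rule mul_ln_split) (use x B F0 avg_pos[OF finB, of F x] avg_pos[OF finX, of F x] in auto)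
  qed simp
  then show ?thesis by (simp add: sum.distrib sum_distrib_right)
qed

lemma split_ent:
  assumes finX: "finite X" and A: "A \<subseteq> X" and F0: "\<And>x. x \<in> X \<Longrightarrow> 0 \<le> F x"
  shows "real (card X) * ent X F = real (card A) * ent A F + real (card (X - A)) * ent (X - A) F
     + (\<Sum>x\<in>A. F x) * ln (avg A F / avg X F) + (\<Sum>x\<in>X - A. F x) * ln (avg (X - A) F / avg X F)"
proof -
  have "real (card X) * ent X F = (\<Sum>x\<in>X - A. F x * ln (F x / avg X F)) + (\<Sum>x\<in>A. F x * ln (F x / avg X F))"
    unfolding card_ent using sum.subset_diff[OF A finX] by simp
  also have "\<dots> = real (card A) * ent A F + real (card (X - A)) * ent (X - A) F
     + (\<Sum>x\<in>A. F x) * ln (avg A F / avg X F) + (\<Sum>x\<in>X - A. F x) * ln (avg (X - A) F / avg X F)"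
    unfolding card_ent using sum_ln_part[OF finX A F0] sum_ln_part[OF finX Diff_subset[of X A] F0]
    by simp
  finally show ?thesis .
qed

lemma log_sum2:
  fixes a1 a2 b1 b2 :: real
  assumes "0 \<le> a1" "0 \<le> a2" "0 \<le> b1" "0 \<le> b2" "0 < a1 \<Longrightarrow> 0 < b1" "0 < a2 \<Longrightarrow> 0 < b2"
  shows "(a1 + a2) * ln ((a1 + a2) / (b1 + b2)) \<le> a1 * ln (a1 / b1) + a2 * ln (a2 / b2)"
proof -
  define a where "a u = (if u then a1 else a2)" for u :: bool
  define b where "b u = (if u then b1 else b2)" for u :: bool
  have "(\<Sum>u\<in>UNIV. a u) * ln ((\<Sum>u\<in>UNIV. a u) / (\<Sum>u\<in>UNIV. b u)) \<le> (\<Sum>u\<in>UNIV. a u * ln (a u / b u))"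
    by (rule log_sum_ineq) (use assms in \<open>auto simp: a_def b_def\<close>)
  moreover have "(\<Sum>u\<in>UNIV. a u) = a1 + a2" by (simp add: UNIV_bool a_def)
  moreover have "(\<Sum>u\<in>UNIV. b u) = b1 + b2" by (simp add: UNIV_bool b_def)
  moreover have "(\<Sum>u\<in>UNIV. a u * ln (a u / b u)) = a1 * ln (a1 / b1) + a2 * ln (a2 / b2)"
    by (simp add: UNIV_bool a_def b_def add.commute)
  ultimately show ?thesis by simp
qed

lemma card_eq_sum_avg: "real (card A) * avg A F = (\<Sum>x\<in>A. F x)"
  unfolding avg_def by (cases "card A = 0") (auto simp: card_eq_0_iff)

lemma ent_subset_le:
  assumes finX: "finite X" and A: "A \<subseteq> X" and F0: "\<And>x. x \<in> X \<Longrightarrow> 0 \<le> F x"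
  shows "real (card A) * ent A F \<le> real (card X) * ent X F"
proof -
  have finA: "finite A" using A finX by (rule finite_subset)
  have finB: "finite (X - A)" using finX by simp
  have e0: "0 \<le> real (card (X - A)) * ent (X - A) F"
    using ent_nonneg[OF finB, of F] F0 by simp
  define m where "m = avg X F"
  have XAB: "real (card X) = real (card A) + real (card (X - A))"
    using card_Diff_subset[OF finA A] card_mono[OF finX A] by simp
  have SX: "(\<Sum>x\<in>A. F x) + (\<Sum>x\<in>X - A. F x) = real (card X) * m"
    unfolding m_def card_eq_sum_avg using sum.subset_diff[OF A finX, of F] by simp
  have SA0: "0 \<le> (\<Sum>x\<in>A. F x)" "0 \<le> (\<Sum>x\<in>X - A. F x)" using F0 A by (auto intro!: sum_nonneg)
  have m0: "0 \<le> m" unfolding m_def by (rule avg_nonneg) (use F0 in auto)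
  have br: "0 \<le> (\<Sum>x\<in>A. F x) * ln (avg A F / m) + (\<Sum>x\<in>X - A. F x) * ln (avg (X - A) F / m)"
  proof -
    have key: "(\<Sum>x\<in>B. F x) * ln ((\<Sum>x\<in>B. F x) / (real (card B) * m)) = (\<Sum>x\<in>B. F x) * ln (avg B F / m)" for B
    proof (cases "card B = 0")
      case True then show ?thesis by (simp add: avg_def)
    next
      case False
      then have "(\<Sum>x\<in>B. F x) / (real (card B) * m) = avg B F / m" unfolding avg_def by simp
      then show ?thesis by simp
    qed
    have pos: "0 < real (card B) * m" if "B \<subseteq> X" "0 < (\<Sum>x\<in>B. F x)" for B
    proof -
      have "B \<noteq> {}" using that by auto
      moreover have "finite B" using that finX by (auto intro: finite_subset)
      ultimately have "0 < card B" by (simp add: card_gt_0_iff)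
      moreover have "0 < m"
      proof -
        have "(\<Sum>x\<in>B. F x) \<le> (\<Sum>x\<in>X. F x)" by (rule sum_mono2[OF finX that(1)]) (use F0 in auto)
        then have "0 < real (card X) * m" unfolding m_def card_eq_sum_avg using that by simp
        then show ?thesis using m0 by (simp add: zero_less_mult_iff)
      qed
      ultimately show ?thesis by simp
    qed
    have "((\<Sum>x\<in>A. F x) + (\<Sum>x\<in>X - A. F x)) * ln (((\<Sum>x\<in>A. F x) + (\<Sum>x\<in>X - A. F x)) / (real (card A) * m + real (card (X - A)) * m))
       \<le> (\<Sum>x\<in>A. F x) * ln ((\<Sum>x\<in>A. F x) / (real (card A) * m)) + (\<Sum>x\<in>X - A. F x) * ln ((\<Sum>x\<in>X - A. F x) / (real (card (X - A)) * m))"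
      by (rule log_sum2) (use SA0 m0 pos A in auto)
    moreover have "real (card A) * m + real (card (X - A)) * m = real (card X) * m" using XAB by (simp add: algebra_simps)
    ultimately show ?thesis unfolding key SX by (cases "real (card X) * m = 0") auto
  qed
  show ?thesis using split_ent[where F=F, OF finX A F0] e0 br unfolding m_def by linarith
qed

lemma ent_local_bound:
  assumes finX: "finite X" and A: "A \<subseteq> X" and F0: "\<And>x. x \<in> X \<Longrightarrow> 0 \<le> F x"
    and c0: "0 < c" and Fc: "\<And>x. x \<in> X - A \<Longrightarrow> F x = c"
    and cA: "0 < card A" and cB: "card (X - A) \<le> card A"
  shows "real (card X) * ent X F \<le> real (card A) * ent A F
     + 32 * sqrt (real (card (X - A)) / real (card X)) * real (card A) * psi (avg A F) c"
proof -
  have finA: "finite A" using A finX by (rule finite_subset)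
  have XAB: "real (card X) = real (card A) + real (card (X - A))"
    using card_Diff_subset[OF finA A] card_mono[OF finX A] by simp
  have eB: "real (card (X - A)) * ent (X - A) F = 0"
  proof (cases "X - A = {}")
    case True then show ?thesis unfolding True by simp
  next
    case False
    have "avg (X - A) F = c" unfolding avg_def using Fc False finX by (simp add: card_gt_0_iff)
    then show ?thesis unfolding card_ent using Fc c0 by simp
  qed
  define al where "al = real (card A)"
  define be where "be = real (card (X - A))"
  define a where "a = avg A F"
  have a0: "0 \<le> a" unfolding a_def by (rule avg_nonneg) (use F0 A in auto)
  have SA: "(\<Sum>x\<in>A. F x) = al * a" unfolding al_def a_def card_eq_sum_avg ..
  have SB: "(\<Sum>x\<in>X - A. F x) = be * c" unfolding be_def using Fc by simp
  have m: "avg X F = (al * a + be * c) / (al + be)"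
  proof -
    have "(\<Sum>x\<in>X. F x) = (\<Sum>x\<in>X - A. F x) + (\<Sum>x\<in>A. F x)" using sum.subset_diff[OF A finX] .
    then show ?thesis unfolding avg_def SA SB XAB al_def be_def by (simp add: algebra_simps)
  qed
  have B2: "(\<Sum>x\<in>X - A. F x) * ln (avg (X - A) F / avg X F) = be * c * ln (c / avg X F)"
  proof (cases "X - A = {}")
    case True then show ?thesis unfolding be_def True by simp
  next
    case False
    have "avg (X - A) F = c" unfolding avg_def using Fc False finX by (simp add: card_gt_0_iff)
    then show ?thesis unfolding SB by simp
  qed
  have al0: "0 < al" unfolding al_def using cA by simp
  have T: "al*a*ln(a/((al*a+be*c)/(al+be))) + be*c*ln(c/((al*a+be*c)/(al+be))) \<le> 32*sqrt(be/(al+be))*al*psi a c"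
    by (rule tp_ab[OF al0 _ _ a0 c0]) (use cB in \<open>simp_all add: al_def be_def\<close>)
  show ?thesis using split_ent[where F=F, OF finX A F0] T eB B2 unfolding SA m[symmetric]
    unfolding al_def be_def a_def XAB by simp
qed


type_synonym tup = "nat \<Rightarrow> nat \<Rightarrow> bool"

definition cls :: "(nat \<times> nat) set \<Rightarrow> tup \<Rightarrow> tup set" where
  "cls D x = {y. \<forall>i j. (i, j) \<notin> D \<longrightarrow> y i j = x i j}"

lemma cls_refl[simp]: "x \<in> cls D x" unfolding cls_def by simp

lemma cls_eq: "y \<in> cls D x \<Longrightarrow> cls D y = cls D x" unfolding cls_def by auto

lemma cls_sym: "y \<in> cls D x \<Longrightarrow> x \<in> cls D y" unfolding cls_def by auto

lemma cls_mono: assumes "D \<subseteq> I" "y \<in> cls I x" shows "cls D y \<subseteq> cls I x"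
proof
  fix z assume z: "z \<in> cls D y"
  have "z i j = x i j" if "(i, j) \<notin> I" for i j
  proof -
    have "(i, j) \<notin> D" using that assms(1) by auto
    then have "z i j = y i j" using z unfolding cls_def by auto
    also have "\<dots> = x i j" using that assms(2) unfolding cls_def by auto
    finally show ?thesis .
  qed
  then show "z \<in> cls I x" unfolding cls_def by auto
qed

definition mk :: "(nat \<times> nat) set \<Rightarrow> tup \<Rightarrow> (nat \<times> nat) set \<Rightarrow> tup" where
  "mk D x T = (\<lambda>i j. if (i, j) \<in> D then (i, j) \<in> T else x i j)"

lemma cls_card:
  assumes "finite D"
  shows "finite (cls D x)" "card (cls D x) = 2 ^ card D"
proof -
  have inj: "inj_on (mk D x) (Pow D)"
  proof (rule inj_onI)
    fix S T :: "(nat \<times> nat) set" assume S: "S \<in> Pow D" and T: "T \<in> Pow D" and eq: "mk D x S = mk D x T"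
    show "S = T"
    proof (rule set_eqI)
      fix s :: "nat \<times> nat"
      obtain i j where s: "s = (i, j)" by (cases s)
      show "s \<in> S \<longleftrightarrow> s \<in> T"
      proof (cases "s \<in> D")
        case True
        have "mk D x S i j = mk D x T i j" using eq by simp
        then show ?thesis using True s unfolding mk_def by simp
      next
        case False then show ?thesis using S T by auto
      qed
    qed
  qed
  have img: "mk D x ` Pow D = cls D x"
  proof
    show "mk D x ` Pow D \<subseteq> cls D x" unfolding mk_def cls_def by auto
    show "cls D x \<subseteq> mk D x ` Pow D"
    proof
      fix y assume y: "y \<in> cls D x"
      have "y = mk D x {s \<in> D. y (fst s) (snd s)}"
        using y unfolding mk_def cls_def by (auto intro!: ext)
      then show "y \<in> mk D x ` Pow D" by blast
    qed
  qed
  show "finite (cls D x)" unfolding img[symmetric] using assms by simp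
  show "card (cls D x) = 2 ^ card D" unfolding img[symmetric] card_image[OF inj] using card_Pow[of D] assms by simp
qed

definition mg :: "(nat \<times> nat) set \<Rightarrow> tup \<Rightarrow> tup \<Rightarrow> tup" where
  "mg D y u = (\<lambda>i j. if (i, j) \<in> D then y i j else u i j)"

lemma mg_prod:
  assumes disj: "D \<inter> I = {}"
  shows "bij_betw (\<lambda>(y, u). mg D y u) (cls D x0 \<times> cls I x0) (cls (D \<union> I) x0)"
proof -
  have "inj_on (\<lambda>(y, u). mg D y u) (cls D x0 \<times> cls I x0)"
  proof (rule inj_onI, clarify)
    fix y u y' u' assume y: "y \<in> cls D x0" and u: "u \<in> cls I x0" and y': "y' \<in> cls D x0" and u': "u' \<in> cls I x0"
      and eq: "mg D y u = mg D y' u'"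
    have "y i j = y' i j \<and> u i j = u' i j" for i j
    proof (cases "(i, j) \<in> D")
      case True
      then have "(i, j) \<notin> I" using disj by auto
      then show ?thesis using True fun_cong[OF fun_cong[OF eq, of i], of j] u u' unfolding mg_def cls_def by auto
    next
      case False
      then show ?thesis using fun_cong[OF fun_cong[OF eq, of i], of j] y y' unfolding mg_def cls_def by auto
    qed
    then show "y = y' \<and> u = u'" by (auto intro!: ext)
  qed
  moreover have "(\<lambda>(y, u). mg D y u) ` (cls D x0 \<times> cls I x0) = cls (D \<union> I) x0"
  proof
    show "(\<lambda>(y, u). mg D y u) ` (cls D x0 \<times> cls I x0) \<subseteq> cls (D \<union> I) x0"
      unfolding mg_def cls_def by auto
    show "cls (D \<union> I) x0 \<subseteq> (\<lambda>(y, u). mg D y u) ` (cls D x0 \<times> cls I x0)"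
    proof
      fix z assume z: "z \<in> cls (D \<union> I) x0"
      define y where "y = (\<lambda>i j. if (i, j) \<in> D then z i j else x0 i j)"
      define u where "u = (\<lambda>i j. if (i, j) \<in> D then x0 i j else z i j)"
      have "y \<in> cls D x0" unfolding y_def cls_def by simp
      moreover have "u \<in> cls I x0" using z unfolding u_def cls_def by auto
      moreover have "z = mg D y u" unfolding mg_def y_def u_def by (auto intro!: ext)
      ultimately show "z \<in> (\<lambda>(y, u). mg D y u) ` (cls D x0 \<times> cls I x0)" by force
    qed
  qed
  ultimately show ?thesis unfolding bij_betw_def by simp
qed

lemma mg_cls1:
  assumes disj: "D \<inter> I = {}" and y: "y \<in> cls D x0" and u: "u \<in> cls I x0"
  shows "cls D (mg D y u) = (\<lambda>y'. mg D y' u) ` cls D x0" "inj_on (\<lambda>y'. mg D y' u) (cls D x0)"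
proof -
  show "cls D (mg D y u) = (\<lambda>y'. mg D y' u) ` cls D x0"
  proof
    show "cls D (mg D y u) \<subseteq> (\<lambda>y'. mg D y' u) ` cls D x0"
    proof
      fix z assume z: "z \<in> cls D (mg D y u)"
      define y' where "y' = (\<lambda>i j. if (i, j) \<in> D then z i j else x0 i j)"
      have "y' \<in> cls D x0" unfolding y'_def cls_def by simp
      moreover have "z = mg D y' u" using z unfolding mg_def y'_def cls_def by (auto intro!: ext)
      ultimately show "z \<in> (\<lambda>y'. mg D y' u) ` cls D x0" by blast
    qed
    show "(\<lambda>y'. mg D y' u) ` cls D x0 \<subseteq> cls D (mg D y u)" unfolding mg_def cls_def by auto
  qed
  show "inj_on (\<lambda>y'. mg D y' u) (cls D x0)"
  proof (rule inj_onI)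
    fix a b assume a: "a \<in> cls D x0" and b: "b \<in> cls D x0" and eq: "mg D a u = mg D b u"
    have "a i j = b i j" for i j
      using fun_cong[OF fun_cong[OF eq, of i], of j] a b unfolding mg_def cls_def by (cases "(i,j) \<in> D") auto
    then show "a = b" by (auto intro!: ext)
  qed
qed

lemma mg_cls2:
  assumes disj: "D \<inter> I = {}" and y: "y \<in> cls D x0" and u: "u \<in> cls I x0"
  shows "cls I (mg D y u) = (\<lambda>u'. mg D y u') ` cls I x0" "inj_on (\<lambda>u'. mg D y u') (cls I x0)"
proof -
  have dI: "\<And>i j. (i, j) \<in> D \<Longrightarrow> (i, j) \<notin> I" using disj by auto
  show "cls I (mg D y u) = (\<lambda>u'. mg D y u') ` cls I x0"
  proof
    show "cls I (mg D y u) \<subseteq> (\<lambda>u'. mg D y u') ` cls I x0"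
    proof
      fix z assume z: "z \<in> cls I (mg D y u)"
      define u' where "u' = (\<lambda>i j. if (i, j) \<in> D then x0 i j else z i j)"
      have "u' \<in> cls I x0" using z u disj unfolding u'_def cls_def mg_def by auto
      moreover have "z = mg D y u'" using z dI unfolding mg_def u'_def cls_def by (auto intro!: ext)
      ultimately show "z \<in> (\<lambda>u'. mg D y u') ` cls I x0" by blast
    qed
    show "(\<lambda>u'. mg D y u') ` cls I x0 \<subseteq> cls I (mg D y u)" using u y disj unfolding mg_def cls_def by auto
  qed
  show "inj_on (\<lambda>u'. mg D y u') (cls I x0)"
  proof (rule inj_onI)
    fix a b assume a: "a \<in> cls I x0" and b: "b \<in> cls I x0" and eq: "mg D y a = mg D y b"
    have "a i j = b i j" for i j
      using fun_cong[OF fun_cong[OF eq, of i], of j] a b dI[of i j] unfolding mg_def cls_def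
      by (cases "(i,j) \<in> D") auto
    then show "a = b" by (auto intro!: ext)
  qed
qed

lemma avg_cong: "(\<And>x. x \<in> A \<Longrightarrow> f x = g x) \<Longrightarrow> avg A f = avg A g"
  unfolding avg_def by (simp cong: sum.cong)

lemma avg_prod_snd:
  assumes "finite Y" "Y \<noteq> {}" "finite U"
  shows "avg (Y \<times> U) (\<lambda>p. g (snd p)) = avg U g"
proof -
  have cY: "0 < real (card Y)" using assms by (simp add: card_gt_0_iff)
  have "(\<Sum>p\<in>Y \<times> U. g (snd p)) = (\<Sum>(y,u)\<in>Y \<times> U. g u)"
    by (simp add: case_prod_beta')
  also have "\<dots> = (\<Sum>y\<in>Y. \<Sum>u\<in>U. g u)" by (rule sum.cartesian_product[symmetric])
  finally show ?thesis unfolding avg_def card_cartesian_product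
    using cY by (simp add: field_simps)
qed

lemma avg_prod_fst:
  assumes "finite U" "U \<noteq> {}" "finite Y"
  shows "avg (Y \<times> U) (\<lambda>p. g (fst p)) = avg Y g"
proof -
  have cU: "0 < real (card U)" using assms by (simp add: card_gt_0_iff)
  have "(\<Sum>p\<in>Y \<times> U. g (fst p)) = (\<Sum>(y,u)\<in>Y \<times> U. g y)"
    by (simp add: case_prod_beta')
  also have "\<dots> = (\<Sum>y\<in>Y. \<Sum>u\<in>U. g y)" by (rule sum.cartesian_product[symmetric])
  finally show ?thesis unfolding avg_def card_cartesian_product
    using cU by (simp add: field_simps sum_distrib_right[symmetric] mult.commute)
qed

lemma cube_two:
  assumes disj: "D \<inter> I = {}" and finD: "finite D" and finI: "finite I" and F0: "\<And>x. 0 \<le> F x"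
  shows "ent (cls (D \<union> I) x0) F \<le> avg (cls (D \<union> I) x0) (\<lambda>x. ent (cls D x) F)
           + avg (cls (D \<union> I) x0) (\<lambda>x. ent (cls I x) F)"
proof -
  define Y where "Y = cls D x0"
  define U where "U = cls I x0"
  define pi where "pi = (\<lambda>(y, u). mg D y u)"
  define H where "H y u = F (mg D y u)" for y u
  have finY: "finite Y" and finU: "finite U" unfolding Y_def U_def using cls_card finD finI by auto
  have Yne: "Y \<noteq> {}" and Une: "U \<noteq> {}" unfolding Y_def U_def by (metis cls_refl empty_iff)+
  have bij: "bij_betw pi (Y \<times> U) (cls (D \<union> I) x0)" unfolding pi_def Y_def U_def by (rule mg_prod[OF disj])
  then have inj: "inj_on pi (Y \<times> U)" and img: "pi ` (Y \<times> U) = cls (D \<union> I) x0"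
    unfolding bij_betw_def by auto
  have e: "ent (cls (D \<union> I) x0) F = ent (Y \<times> U) (\<lambda>(y,u). H y u)"
    unfolding img[symmetric] ent_image(1)[OF inj] by (simp add: pi_def H_def comp_def case_prod_beta')
  have a1: "avg (cls (D \<union> I) x0) (\<lambda>x. ent (cls D x) F) = avg U (\<lambda>u. ent Y (\<lambda>y. H y u))"
  proof -
    have "avg (cls (D \<union> I) x0) (\<lambda>x. ent (cls D x) F) = avg (Y \<times> U) ((\<lambda>x. ent (cls D x) F) \<circ> pi)"
      unfolding img[symmetric] ent_image(2)[OF inj] ..
    also have "\<dots> = avg (Y \<times> U) (\<lambda>p. (\<lambda>u. ent Y (\<lambda>y. H y u)) (snd p))"
    proof (rule avg_cong)
      fix p assume p: "p \<in> Y \<times> U"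
      obtain y u where yu: "p = (y, u)" "y \<in> Y" "u \<in> U" using p by auto
      have "cls D (mg D y u) = (\<lambda>y'. mg D y' u) ` Y" "inj_on (\<lambda>y'. mg D y' u) Y"
        using mg_cls1[OF disj] yu unfolding Y_def U_def by auto
      then have "ent (cls D (mg D y u)) F = ent Y (F \<circ> (\<lambda>y'. mg D y' u))" using ent_image(1) by metis
      then show "((\<lambda>x. ent (cls D x) F) \<circ> pi) p = (\<lambda>p. (\<lambda>u. ent Y (\<lambda>y. H y u)) (snd p)) p"
        unfolding yu pi_def H_def by (simp add: comp_def)
    qed
    also have "\<dots> = avg U (\<lambda>u. ent Y (\<lambda>y. H y u))" by (rule avg_prod_snd[OF finY Yne finU])
    finally show ?thesis .
  qed
  have a2: "avg (cls (D \<union> I) x0) (\<lambda>x. ent (cls I x) F) = avg Y (\<lambda>y. ent U (H y))"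
  proof -
    have "avg (cls (D \<union> I) x0) (\<lambda>x. ent (cls I x) F) = avg (Y \<times> U) ((\<lambda>x. ent (cls I x) F) \<circ> pi)"
      unfolding img[symmetric] ent_image(2)[OF inj] ..
    also have "\<dots> = avg (Y \<times> U) (\<lambda>p. (\<lambda>y. ent U (H y)) (fst p))"
    proof (rule avg_cong)
      fix p assume p: "p \<in> Y \<times> U"
      obtain y u where yu: "p = (y, u)" "y \<in> Y" "u \<in> U" using p by auto
      have "cls I (mg D y u) = (\<lambda>u'. mg D y u') ` U" "inj_on (\<lambda>u'. mg D y u') U"
        using mg_cls2[OF disj] yu unfolding Y_def U_def by auto
      then have "ent (cls I (mg D y u)) F = ent U (F \<circ> (\<lambda>u'. mg D y u'))" using ent_image(1) by metis
      then show "((\<lambda>x. ent (cls I x) F) \<circ> pi) p = (\<lambda>p. (\<lambda>y. ent U (H y)) (fst p)) p"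
        unfolding yu pi_def H_def by (simp add: comp_def)
    qed
    also have "\<dots> = avg Y (\<lambda>y. ent U (H y))" by (rule avg_prod_fst[OF finU Une finY])
    finally show ?thesis .
  qed
  show ?thesis unfolding e a1 a2
    by (rule ent_product[OF finY finU Yne Une]) (simp add: H_def F0)
qed

lemma avg_mono: "(\<And>x. x \<in> A \<Longrightarrow> f x \<le> g x) \<Longrightarrow> avg A f \<le> avg A g"
  unfolding avg_def by (intro divide_right_mono sum_mono) auto

lemma avg_sum: "avg A (\<lambda>x. \<Sum>i\<in>J. g i x) = (\<Sum>i\<in>J. avg A (g i))"
  unfolding avg_def by (simp add: sum.swap[of _ A J] sum_divide_distrib)

lemma avg_swap_cls:
  assumes finA: "finite A" and refl: "\<And>x. x \<in> A \<Longrightarrow> x \<in> Q x" and sub: "\<And>x. x \<in> A \<Longrightarrow> Q x \<subseteq> A"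
    and eq: "\<And>x y. x \<in> A \<Longrightarrow> y \<in> Q x \<Longrightarrow> Q y = Q x"
  shows "avg A (\<lambda>x. avg (Q x) h) = avg A h"
  unfolding avg_def[of A] unfolding avg_def using swap_cls[OF assms, of h] by simp

lemma tensor:
  fixes Dj :: "'j \<Rightarrow> (nat \<times> nat) set"
  assumes "finite J" "\<forall>j\<in>J. finite (Dj j)" "\<forall>i\<in>J. \<forall>j\<in>J. i \<noteq> j \<longrightarrow> Dj i \<inter> Dj j = {}"
    and F0: "\<And>x. 0 \<le> F x"
  shows "ent (cls (\<Union>j\<in>J. Dj j) x0) F \<le> (\<Sum>j\<in>J. avg (cls (\<Union>j\<in>J. Dj j) x0) (\<lambda>x. ent (cls (Dj j) x) F))"
  using assms(1-3)
proof (induction J arbitrary: x0 rule: finite_induct)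
  case empty
  have "cls {} x0 = {x0}" unfolding cls_def by (auto intro!: ext)
  then show ?case by (simp add: ent_def avg_def)
next
  case (insert j J)
  define I where "I = (\<Union>i\<in>J. Dj i)"
  have U: "(\<Union>i\<in>insert j J. Dj i) = Dj j \<union> I" unfolding I_def by simp
  have disj: "Dj j \<inter> I = {}" unfolding I_def using insert by auto
  have finD: "finite (Dj j)" using insert by auto
  have finI: "finite I" unfolding I_def using insert by auto
  define A where "A = cls (Dj j \<union> I) x0"
  have finA: "finite A" unfolding A_def using cls_card finD finI by auto
  define h where "h i y = ent (cls (Dj i) y) F" for i y
  have IH: "ent (cls I x) F \<le> (\<Sum>i\<in>J. avg (cls I x) (h i))" for x
    unfolding I_def h_def by (rule insert.IH) (use insert in auto)
  have step1: "ent A F \<le> avg A (h j) + avg A (\<lambda>x. ent (cls I x) F)"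
    unfolding A_def h_def by (rule cube_two[OF disj finD finI F0])
  have "avg A (\<lambda>x. ent (cls I x) F) \<le> avg A (\<lambda>x. \<Sum>i\<in>J. avg (cls I x) (h i))"
    by (rule avg_mono) (rule IH)
  also have "\<dots> = (\<Sum>i\<in>J. avg A (\<lambda>x. avg (cls I x) (h i)))" by (rule avg_sum)
  also have "\<dots> = (\<Sum>i\<in>J. avg A (h i))"
  proof (rule sum.cong)
    fix i assume "i \<in> J"
    show "avg A (\<lambda>x. avg (cls I x) (h i)) = avg A (h i)"
    proof (rule avg_swap_cls[OF finA])
      show "\<And>x. x \<in> cls I x" by simp
      show "\<And>x. x \<in> A \<Longrightarrow> cls I x \<subseteq> A" unfolding A_def by (rule cls_mono) auto
      show "\<And>x y. y \<in> cls I x \<Longrightarrow> cls I y = cls I x" by (rule cls_eq)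
    qed
  qed simp
  finally have "ent A F \<le> avg A (h j) + (\<Sum>i\<in>J. avg A (h i))" using step1 by simp
  then show ?case unfolding U A_def[symmetric] h_def[symmetric] using insert by simp
qed


lemma w_ge: "10 * (log 2 (real k) + log 2 (real n)) \<le> real (wpar k n)"
  unfolding wpar_def by linarith

lemma p_zero_if_w_zero: "wpar k n = 0 \<Longrightarrow> ppar k n = 0"
  unfolding ppar_def by simp

lemma numerics:
  assumes n0: "0 < n" and k0: "0 < k" and wn: "real (wpar k n) < real n / 2" and p0: "0 < ppar k n"
  shows "1 \<le> wpar k n" "(real k * real n)^10 \<le> 2 ^ wpar k n" "21 \<le> n" "ppar k n \<le> n"
    "real (ppar k n) < real n / (2 * real (wpar k n)) + 1"
proof -
  define w where "w = wpar k n"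
  define p where "p = ppar k n"
  show w1: "1 \<le> wpar k n" using p0 p_zero_if_w_zero by (cases "wpar k n") auto
  have wge: "10 * (log 2 (real k) + log 2 (real n)) \<le> real w" unfolding w_def by (rule w_ge)
  have lm: "log 2 (real k) + log 2 (real n) = log 2 (real k * real n)"
    using n0 k0 by (simp add: log_mult)
  have kn: "0 < real k * real n" using n0 k0 by simp
  have "(real k * real n)^10 = (real k * real n) powr 10" using kn by (simp add: powr_realpow)
  also have "\<dots> = (2 powr (log 2 (real k * real n))) powr 10" using kn by simp
  also have "\<dots> = 2 powr (10 * log 2 (real k * real n))" by (simp add: powr_powr mult.commute)
  also have "\<dots> \<le> 2 powr real w" using wge lm by (intro powr_mono) auto
  also have "\<dots> = 2 ^ w" by (simp add: powr_realpow)
  finally show P: "(real k * real n)^10 \<le> 2 ^ wpar k n" unfolding w_def .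
  have kn2: "2 \<le> real k * real n"
  proof (cases "k = 1 \<and> n = 1")
    case True
    then have "w = 0" unfolding w_def wpar_def by simp
    then show ?thesis using w1 unfolding w_def by simp
  next
    case False
    then have "2 \<le> k \<or> 2 \<le> n" using n0 k0 by linarith
    then have "2 \<le> k * n"
    proof
      assume "2 \<le> k" then show ?thesis using mult_le_mono[of 2 k 1 n] n0 by simp
    next
      assume "2 \<le> n" then show ?thesis using mult_le_mono[of 1 k 2 n] k0 by simp
    qed
    then have "real 2 \<le> real (k * n)" by (simp only: of_nat_le_iff)
    then show ?thesis by simp
  qed
  have "(2::real)^10 \<le> (real k * real n)^10" using kn2 by (intro power_mono) auto
  then have "(2::real)^10 \<le> 2 ^ w" using P unfolding w_def by simp
  then have w10: "10 \<le> w" by (rule power_le_imp_le_exp[rotated]) simp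
  show n21: "21 \<le> n" using wn w10 unfolding w_def by simp
  have pl: "real p < real n / (2 * real w) + 1"
  proof -
    have x0: "0 \<le> real n / (2 * real w)" by simp
    have "real p = real_of_int \<lceil>real n / (2 * real w)\<rceil>" unfolding p_def ppar_def w_def
      using x0 by simp
    also have "\<dots> < real n / (2 * real w) + 1" by linarith
    finally show ?thesis .
  qed
  then show "real (ppar k n) < real n / (2 * real (wpar k n)) + 1" unfolding p_def w_def .
  have "real n / (2 * real w) \<le> real n / 20" using w10 by (intro divide_left_mono) auto
  then have "real p < real n" using pl n21 by simp
  then show "ppar k n \<le> n" unfolding p_def by simp
qed

locale genctx =
  fixes n k :: nat and B :: "nat \<Rightarrow> nat set" and C :: "nat set"
  assumes n0: "0 < n" and k0: "0 < k" and wn: "real (wpar k n) < real n / 2"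
    and Bs: "\<forall>t<ppar k n. B t \<subseteq> {..<n} \<and> card (B t) = wpar k n"
    and Bd: "\<forall>t<ppar k n. \<forall>t'<ppar k n. t \<noteq> t' \<longrightarrow> B t \<inter> B t' = {}"
    and Cd: "C = {..<n} - (\<Union>t<ppar k n. B t)"
begin

abbreviation "w \<equiv> wpar k n"
abbreviation "p \<equiv> ppar k n"
abbreviation "V \<equiv> generic_set k n B"

definition I :: "(nat \<times> nat) set" where "I = {..<k} \<times> {..<n}"
definition X :: "tup set" where "X = cls I (\<lambda>_ _. False)"

definition J :: "((nat \<times> nat) + (nat \<times> nat)) set" where
  "J = ({..<p} \<times> {..<k}) <+> (C \<times> {..<k})"

fun Dj :: "((nat \<times> nat) + (nat \<times> nat)) \<Rightarrow> (nat \<times> nat) set" where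
  "Dj (Inl (l, r)) = {r} \<times> B l"
| "Dj (Inr (c, r)) = {(r, c)}"

lemma Bsub: "t < p \<Longrightarrow> B t \<subseteq> {..<n}" using Bs by auto
lemma Bcard: "t < p \<Longrightarrow> card (B t) = w" using Bs by auto
lemma Bfin: "t < p \<Longrightarrow> finite (B t)" using Bsub finite_subset by blast
lemma Csub: "C \<subseteq> {..<n}" using Cd by auto
lemma Cfin: "finite C" using Csub finite_subset by blast
lemma CB: "c \<in> C \<Longrightarrow> t < p \<Longrightarrow> c \<notin> B t" using Cd by auto

lemma X_iff: "x \<in> X \<longleftrightarrow> (\<forall>i j. (k \<le> i \<or> n \<le> j) \<longrightarrow> \<not> x i j)"
  unfolding X_def cls_def I_def by auto

lemma V_iff: "x \<in> V \<longleftrightarrow> x \<in> X \<and> (\<forall>i<k. \<forall>i'<k. i \<noteq> i' \<longrightarrow> (\<forall>t<p. \<exists>j\<in>B t. x i j \<noteq> x i' j))"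
  unfolding generic_set_def X_iff by auto

lemma VX: "V \<subseteq> X" using V_iff by auto

lemma finI: "finite I" unfolding I_def by simp
lemma finX: "finite X" unfolding X_def using cls_card finI by auto
lemma finV: "finite V" using finite_subset[OF VX finX] .

lemma finJ: "finite J" unfolding J_def using Cfin by simp

lemma Dj_fin: "j \<in> J \<Longrightarrow> finite (Dj j)"
  unfolding J_def using Bfin by auto

lemma Dj_sub: "j \<in> J \<Longrightarrow> Dj j \<subseteq> I"
  unfolding J_def I_def using Bsub Csub by (auto dest!: Bsub)

lemma Dj_disj: "\<forall>i\<in>J. \<forall>j\<in>J. i \<noteq> j \<longrightarrow> Dj i \<inter> Dj j = {}"
proof (intro ballI impI)
  fix i j assume i: "i \<in> J" and j: "j \<in> J" and ij: "i \<noteq> j"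
  show "Dj i \<inter> Dj j = {}"
  proof (cases i)
    case (Inl a)
    obtain l r where a: "a = (l, r)" by (cases a)
    have l: "l < p" using i Inl a unfolding J_def by auto
    show ?thesis
    proof (cases j)
      case (Inl b)
      obtain l' r' where b: "b = (l', r')" by (cases b)
      have l': "l' < p" using j Inl b unfolding J_def by auto
      show ?thesis
      proof (cases "r = r'")
        case True
        then have "l \<noteq> l'" using ij \<open>i = Inl a\<close> Inl a b by auto
        then have "B l \<inter> B l' = {}" using Bd l l' by auto
        then show ?thesis using \<open>i = Inl a\<close> Inl a b by auto
      next
        case False then show ?thesis using \<open>i = Inl a\<close> Inl a b by auto
      qed
    next
      case (Inr b)
      obtain c r' where b: "b = (c, r')" by (cases b)
      have c: "c \<in> C" using j Inr b unfolding J_def by auto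
      show ?thesis using CB[OF c l] \<open>i = Inl a\<close> Inr a b by auto
    qed
  next
    case (Inr a)
    obtain c r where a: "a = (c, r)" by (cases a)
    have c: "c \<in> C" using i Inr a unfolding J_def by auto
    show ?thesis
    proof (cases j)
      case (Inl b)
      obtain l r' where b: "b = (l, r')" by (cases b)
      have l: "l < p" using j Inl b unfolding J_def by auto
      show ?thesis using CB[OF c l] \<open>i = Inr a\<close> Inl a b by auto
    next
      case (Inr b)
      obtain c' r' where b: "b = (c', r')" by (cases b)
      show ?thesis using ij \<open>i = Inr a\<close> Inr a b by auto
    qed
  qed
qed

lemma Dj_Union: "(\<Union>j\<in>J. Dj j) = I"
proof
  show "(\<Union>j\<in>J. Dj j) \<subseteq> I" using Dj_sub by auto
  show "I \<subseteq> (\<Union>j\<in>J. Dj j)"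
  proof
    fix s assume s: "s \<in> I"
    obtain r c where rc: "s = (r, c)" "r < k" "c < n" using s unfolding I_def by auto
    show "s \<in> (\<Union>j\<in>J. Dj j)"
    proof (cases "c \<in> C")
      case True
      then have "Inr (c, r) \<in> J" using rc unfolding J_def by auto
      then show ?thesis using rc by force
    next
      case False
      then obtain l where l: "l < p" "c \<in> B l" using Cd rc by auto
      then have "Inl (l, r) \<in> J" using rc unfolding J_def by auto
      then show ?thesis using rc l by force
    qed
  qed
qed


lemma inl_char:
  assumes l: "l < p" and r: "r < k" and y: "y \<in> V" and z: "z \<in> cls (Dj (Inl (l, r))) y"
  shows "z \<in> V \<longleftrightarrow> (\<forall>i<k. i \<noteq> r \<longrightarrow> (\<exists>j\<in>B l. z r j \<noteq> y i j))"
proof -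
  have zy: "z i j = y i j" if "i \<noteq> r \<or> j \<notin> B l" for i j using z that unfolding cls_def by auto
  have yX: "y \<in> X" and yg: "\<forall>i<k. \<forall>i'<k. i \<noteq> i' \<longrightarrow> (\<forall>t<p. \<exists>j\<in>B t. y i j \<noteq> y i' j)"
    using y V_iff by auto
  show ?thesis
  proof
    assume zV: "z \<in> V"
    show "\<forall>i<k. i \<noteq> r \<longrightarrow> (\<exists>j\<in>B l. z r j \<noteq> y i j)"
    proof (intro allI impI)
      fix i assume i: "i < k" "i \<noteq> r"
      obtain j where "j \<in> B l" "z r j \<noteq> z i j" using zV V_iff r i l by (metis)
      then show "\<exists>j\<in>B l. z r j \<noteq> y i j" using zy i by auto
    qed
  next
    assume H: "\<forall>i<k. i \<noteq> r \<longrightarrow> (\<exists>j\<in>B l. z r j \<noteq> y i j)"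
    have zX: "z \<in> X"
      unfolding X_iff
    proof (intro allI impI)
      fix i j assume ij: "k \<le> i \<or> n \<le> j"
      have "i \<noteq> r \<or> j \<notin> B l" using ij r Bsub[OF l] by auto
      then have "z i j = y i j" by (rule zy)
      then show "\<not> z i j" using yX ij unfolding X_iff by auto
    qed
    have "\<forall>i<k. \<forall>i'<k. i \<noteq> i' \<longrightarrow> (\<forall>t<p. \<exists>j\<in>B t. z i j \<noteq> z i' j)"
    proof (intro allI impI)
      fix i i' t assume i: "i < k" and i': "i' < k" and ii: "i \<noteq> i'" and t: "t < p"
      show "\<exists>j\<in>B t. z i j \<noteq> z i' j"
      proof (cases "t = l")
        case False
        then have dj: "B t \<inter> B l = {}" using Bd t l by auto
        obtain j where j: "j \<in> B t" "y i j \<noteq> y i' j" using yg i i' ii t by blast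
        then have "j \<notin> B l" using dj by auto
        then have "z i j = y i j" "z i' j = y i' j" using zy by auto
        then show ?thesis using j by auto
      next
        case True
        show ?thesis
        proof (cases "i = r")
          case True
          then have "i' \<noteq> r" using ii by simp
          then obtain j where j: "j \<in> B l" "z r j \<noteq> y i' j" using H i' by auto
          then show ?thesis using zy \<open>i' \<noteq> r\<close> \<open>t = l\<close> True by auto
        next
          case False
          show ?thesis
          proof (cases "i' = r")
            case True
            obtain j where j: "j \<in> B l" "z r j \<noteq> y i j" using H i False by auto
            then show ?thesis using zy False \<open>t = l\<close> True by auto
          next
            case False2: False
            obtain j where j: "j \<in> B t" "y i j \<noteq> y i' j" using yg i i' ii t by blast
            then show ?thesis using zy False False2 by auto
          qed
        qed
      qed
    qed
    then show "z \<in> V" using zX V_iff by auto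
  qed
qed

lemma inl_class:
  assumes l: "l < p" and r: "r < k" and y: "y \<in> V"
  shows "cls (Dj (Inl (l, r))) y \<inter> V = repl_set k B y l r"
proof
  show "cls (Dj (Inl (l, r))) y \<inter> V \<subseteq> repl_set k B y l r"
  proof
    fix z assume z: "z \<in> cls (Dj (Inl (l, r))) y \<inter> V"
    then have "\<forall>i<k. i \<noteq> r \<longrightarrow> (\<exists>j\<in>B l. z r j \<noteq> y i j)" using inl_char[OF l r y] by auto
    then show "z \<in> repl_set k B y l r" using z unfolding repl_set_def cls_def by auto
  qed
  show "repl_set k B y l r \<subseteq> cls (Dj (Inl (l, r))) y \<inter> V"
  proof
    fix z assume z: "z \<in> repl_set k B y l r"
    then have zc: "z \<in> cls (Dj (Inl (l, r))) y" unfolding repl_set_def cls_def by auto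
    have "\<forall>i<k. i \<noteq> r \<longrightarrow> (\<exists>j\<in>B l. z r j \<noteq> y i j)" using z unfolding repl_set_def by auto
    then show "z \<in> cls (Dj (Inl (l, r))) y \<inter> V" using inl_char[OF l r y zc] zc by auto
  qed
qed

lemma inl_out:
  assumes l: "l < p" and r: "r < k" and y: "y \<in> V"
  shows "cls (Dj (Inl (l, r))) y - V \<subseteq> (\<Union>i\<in>{..<k} - {r}. {z \<in> cls (Dj (Inl (l, r))) y. \<forall>j\<in>B l. z r j = y i j})"
proof
  fix z assume z: "z \<in> cls (Dj (Inl (l, r))) y - V"
  then have "\<not> (\<forall>i<k. i \<noteq> r \<longrightarrow> (\<exists>j\<in>B l. z r j \<noteq> y i j))" using inl_char[OF l r y] by auto
  then obtain i where i: "i < k" "i \<noteq> r" "\<forall>j\<in>B l. z r j = y i j" by auto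
  then show "z \<in> (\<Union>i\<in>{..<k} - {r}. {z \<in> cls (Dj (Inl (l, r))) y. \<forall>j\<in>B l. z r j = y i j})"
    using z by auto
qed

lemma inl_out_card:
  assumes l: "l < p" and r: "r < k" and y: "y \<in> V"
  shows "card (cls (Dj (Inl (l, r))) y - V) \<le> k - 1"
proof -
  let ?Q = "cls (Dj (Inl (l, r))) y"
  have fin: "finite ?Q" using cls_card[of "Dj (Inl (l, r))"] Bfin[OF l] by auto
  have one: "card {z \<in> ?Q. \<forall>j\<in>B l. z r j = y i j} \<le> 1" for i
  proof -
    have "\<forall>a\<in>{z \<in> ?Q. \<forall>j\<in>B l. z r j = y i j}. \<forall>b\<in>{z \<in> ?Q. \<forall>j\<in>B l. z r j = y i j}. a = b"
    proof (intro ballI)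
      fix a b assume a: "a \<in> {z \<in> ?Q. \<forall>j\<in>B l. z r j = y i j}" and b: "b \<in> {z \<in> ?Q. \<forall>j\<in>B l. z r j = y i j}"
      have "a i' j = b i' j" for i' j
      proof (cases "i' = r \<and> j \<in> B l")
        case True then show ?thesis using a b by auto
      next
        case False then show ?thesis using a b unfolding cls_def by auto
      qed
      then show "a = b" by (auto intro!: ext)
    qed
    moreover have fin': "finite {z \<in> ?Q. \<forall>j\<in>B l. z r j = y i j}" using fin by simp
    ultimately show ?thesis using card_le_Suc0_iff_eq[OF fin'] by (simp only: One_nat_def)
  qed
  have "card (?Q - V) \<le> card (\<Union>i\<in>{..<k} - {r}. {z \<in> ?Q. \<forall>j\<in>B l. z r j = y i j})"
    by (rule card_mono) (use fin inl_out[OF l r y] in auto)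
  also have "\<dots> \<le> (\<Sum>i\<in>{..<k} - {r}. card {z \<in> ?Q. \<forall>j\<in>B l. z r j = y i j})" by (rule card_UN_le) simp
  also have "\<dots> \<le> (\<Sum>i\<in>{..<k} - {r}. 1)" by (rule sum_mono) (rule one)
  also have "\<dots> = k - 1" using r by simp
  finally show ?thesis .
qed

lemma inr_sub:
  assumes c: "c \<in> C" and r: "r < k" and y: "y \<in> V"
  shows "cls (Dj (Inr (c, r))) y \<subseteq> V"
proof
  fix z assume z: "z \<in> cls (Dj (Inr (c, r))) y"
  have zy: "z i j = y i j" if "i \<noteq> r \<or> j \<noteq> c" for i j using z that unfolding cls_def by auto
  have yX: "y \<in> X" and yg: "\<forall>i<k. \<forall>i'<k. i \<noteq> i' \<longrightarrow> (\<forall>t<p. \<exists>j\<in>B t. y i j \<noteq> y i' j)"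
    using y V_iff by auto
  have "z \<in> X" unfolding X_iff
  proof (intro allI impI)
    fix i j assume ij: "k \<le> i \<or> n \<le> j"
    have "i \<noteq> r \<or> j \<noteq> c" using ij r Csub c by auto
    then show "\<not> z i j" using zy yX ij unfolding X_iff by auto
  qed
  moreover have "\<forall>i<k. \<forall>i'<k. i \<noteq> i' \<longrightarrow> (\<forall>t<p. \<exists>j\<in>B t. z i j \<noteq> z i' j)"
  proof (intro allI impI)
    fix i i' t assume i: "i < k" and i': "i' < k" and ii: "i \<noteq> i'" and t: "t < p"
    obtain j where j: "j \<in> B t" "y i j \<noteq> y i' j" using yg i i' ii t by blast
    then have "j \<noteq> c" using CB[OF c t] by auto
    then have "z i j = y i j" "z i' j = y i' j" using zy by auto
    then show "\<exists>j\<in>B t. z i j \<noteq> z i' j" using j by auto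
  qed
  ultimately show "z \<in> V" using V_iff by auto
qed

lemma inr_class:
  shows "cls (Dj (Inr (c, r))) y = {y, flip_bit y r c}"
proof
  show "cls (Dj (Inr (c, r))) y \<subseteq> {y, flip_bit y r c}"
  proof
    fix z assume z: "z \<in> cls (Dj (Inr (c, r))) y"
    show "z \<in> {y, flip_bit y r c}"
    proof (cases "z r c = y r c")
      case True
      then have "z = y" using z unfolding cls_def by (auto intro!: ext)
      then show ?thesis by simp
    next
      case False
      have "z i j = flip_bit y r c i j" for i j
      proof (cases "i = r \<and> j = c")
        case True then show ?thesis using False unfolding flip_bit_def by auto
      next
        case F2: False then show ?thesis using z unfolding cls_def flip_bit_def by auto
      qed
      then have "z = flip_bit y r c" by (auto intro!: ext)
      then show ?thesis by simp
    qed
  qed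
  show "{y, flip_bit y r c} \<subseteq> cls (Dj (Inr (c, r))) y" unfolding cls_def flip_bit_def by auto
qed

lemma flip_ne: "flip_bit y r c \<noteq> y"
proof
  assume "flip_bit y r c = y"
  then have "flip_bit y r c r c = y r c" by simp
  then show False unfolding flip_bit_def by simp
qed


lemma num_p:
  assumes p0: "0 < p"
  shows "(64 * real p * real k)^2 * real k \<le> 2 ^ w" "2 * real p * real k ^ 2 \<le> 2 ^ w"
    "2 * real k \<le> 2 ^ w"
proof -
  note N = numerics[OF n0 k0 wn p0]
  have kn: "(real k * real n)^10 \<le> 2 ^ w" using N(2) by simp
  have n21: "21 \<le> real n" using N(3) by simp
  have pn: "real p \<le> real n" using N(4) by simp
  have k1: "1 \<le> real k" using k0 by simp
  have n1: "1 \<le> real n" using n21 by simp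
  have e: "(real k * real n)^10 = (real k ^ 3 * real n ^ 2) * (real k ^ 7 * real n ^ 8)"
    by (simp add: power_mult_distrib algebra_simps flip: power_add)
  have k7: "1 \<le> real k ^ 7" using k1 by simp
  have n8: "4096 \<le> real n ^ 8"
  proof -
    have "(21::real)^8 \<le> real n ^ 8" using n21 by (intro power_mono) auto
    then show ?thesis by simp
  qed
  have "1 * 4096 \<le> real k ^ 7 * real n ^ 8" by (rule mult_mono[OF k7 n8]) auto
  then have big: "4096 \<le> real k ^ 7 * real n ^ 8" by simp
  have base: "4096 * (real k ^ 3 * real n ^ 2) \<le> (real k * real n)^10"
  proof -
    have "4096 * (real k ^ 3 * real n ^ 2) \<le> (real k ^ 7 * real n ^ 8) * (real k ^ 3 * real n ^ 2)"
      by (rule mult_right_mono[OF big]) simp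
    then show ?thesis unfolding e by (simp add: mult.commute)
  qed
  have "(64 * real p * real k)^2 * real k = 4096 * real p ^ 2 * real k ^ 3"
    by (simp add: power2_eq_square power3_eq_cube algebra_simps)
  also have "\<dots> \<le> 4096 * real n ^ 2 * real k ^ 3" using pn by (intro mult_right_mono mult_left_mono power_mono) auto
  also have "\<dots> = 4096 * (real k ^ 3 * real n ^ 2)" by simp
  also have "\<dots> \<le> 2 ^ w" using base kn by linarith
  finally show "(64 * real p * real k)^2 * real k \<le> 2 ^ w" .
  have "2 * real p * real k ^ 2 \<le> (64 * real p * real k)^2 * real k"
  proof -
    have "1 \<le> real p" using p0 by simp
    then have "2 * real p * real k ^ 2 \<le> 4096 * (real p * real p) * (real k ^ 2 * real k)"
      using k1 by (intro mult_mono) (auto simp: power2_eq_square)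
    then show ?thesis by (simp add: power2_eq_square algebra_simps)
  qed
  then show "2 * real p * real k ^ 2 \<le> 2 ^ w" using \<open>(64 * real p * real k)^2 * real k \<le> 2 ^ w\<close> by linarith
  have "2 * real k \<le> 2 * real p * real k ^ 2"
  proof -
    have "1 \<le> real p" using p0 by simp
    then show ?thesis using k1 by (intro mult_mono) (auto simp: power2_eq_square)
  qed
  then show "2 * real k \<le> 2 ^ w" using \<open>2 * real p * real k ^ 2 \<le> 2 ^ w\<close> by linarith
qed

definition qv :: "((nat \<times> nat) + (nat \<times> nat)) \<Rightarrow> tup \<Rightarrow> tup set" where
  "qv j y = cls (Dj j) y \<inter> V"

definition eps :: "((nat \<times> nat) + (nat \<times> nat)) \<Rightarrow> real" where
  "eps j = (case j of Inl _ \<Rightarrow> real (k - 1) / 2 ^ w | Inr _ \<Rightarrow> 0)"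

lemma cls_fin: "j \<in> J \<Longrightarrow> finite (cls (Dj j) x)" using cls_card Dj_fin by auto

lemma comp_props:
  assumes j: "j \<in> J" and x: "x \<in> X" and ne: "qv j x \<noteq> {}"
  shows "real (card (cls (Dj j) x - V)) \<le> eps j * real (card (cls (Dj j) x))"
    "card (cls (Dj j) x - V) \<le> card (cls (Dj j) x \<inter> V)"
proof -
  obtain y where y: "y \<in> cls (Dj j) x" "y \<in> V" using ne unfolding qv_def by auto
  have Qy: "cls (Dj j) y = cls (Dj j) x" using cls_eq[OF y(1)] .
  have finQ: "finite (cls (Dj j) x)" using cls_fin[OF j] .
  have "real (card (cls (Dj j) x - V)) \<le> eps j * real (card (cls (Dj j) x)) \<and>
        card (cls (Dj j) x - V) \<le> card (cls (Dj j) x \<inter> V)"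
  proof (cases j)
    case (Inl a)
    obtain l r where a: "a = (l, r)" by (cases a)
    have l: "l < p" and r: "r < k" using j Inl a unfolding J_def by auto
    have p0: "0 < p" using l by simp
    have out: "card (cls (Dj j) x - V) \<le> k - 1" using inl_out_card[OF l r y(2)] Qy Inl a by simp
    have cQ: "card (cls (Dj j) x) = 2 ^ w"
    proof -
      have "card (Dj j) = w" using Inl a Bcard[OF l] by (simp add: card_cartesian_product)
      then show ?thesis using cls_card Dj_fin[OF j] by auto
    qed
    have pw: "2 * real k \<le> 2 ^ w" using num_p[OF p0] by simp
    have "real (2 * k) \<le> real (2 ^ w)" using pw by simp
    then have pwn: "2 * k \<le> 2 ^ w" by (simp only: of_nat_le_iff)
    have "eps j * real (card (cls (Dj j) x)) = real (k - 1)" using cQ Inl by (simp add: eps_def)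
    moreover have "real (card (cls (Dj j) x - V)) \<le> real (k - 1)" using out by (simp only: of_nat_le_iff)
    ultimately have e1: "real (card (cls (Dj j) x - V)) \<le> eps j * real (card (cls (Dj j) x))" by simp
    have "card (cls (Dj j) x) = card (cls (Dj j) x - V) + card (cls (Dj j) x \<inter> V)"
      using card_Int_Diff[OF finQ, of V] by simp
    then have e2: "card (cls (Dj j) x - V) \<le> card (cls (Dj j) x \<inter> V)" using out pwn cQ by linarith
    show ?thesis using e1 e2 by simp
  next
    case (Inr a)
    obtain c r where a: "a = (c, r)" by (cases a)
    have c: "c \<in> C" and r: "r < k" using j Inr a unfolding J_def by auto
    have "cls (Dj j) x \<subseteq> V" using inr_sub[OF c r y(2)] Qy Inr a by simp
    then have e: "cls (Dj j) x - V = {}" by auto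
    show ?thesis unfolding e using Inr by (simp add: eps_def)
  qed
  then show "real (card (cls (Dj j) x - V)) \<le> eps j * real (card (cls (Dj j) x))"
    "card (cls (Dj j) x - V) \<le> card (cls (Dj j) x \<inter> V)" by auto
qed

end


lemma ent_cong: "(\<And>x. x \<in> A \<Longrightarrow> F x = G x) \<Longrightarrow> ent A F = ent A G"
proof -
  assume h: "\<And>x. x \<in> A \<Longrightarrow> F x = G x"
  then have "avg A F = avg A G" by (rule avg_cong)
  then show ?thesis unfolding ent_def using h by (simp cong: sum.cong)
qed

lemma ent_const: "(\<And>x. x \<in> A \<Longrightarrow> F x = c) \<Longrightarrow> ent A F = 0"
proof -
  assume h: "\<And>x. x \<in> A \<Longrightarrow> F x = c"
  show ?thesis
  proof (cases "finite A \<and> A \<noteq> {}")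
    case True
    then have "avg A F = c" unfolding avg_def using h by (simp add: card_gt_0_iff)
    then show ?thesis unfolding ent_def using h by (cases "c = 0") simp_all
  next
    case False
    then show ?thesis unfolding ent_def by auto
  qed
qed

context genctx
begin

lemma qv_eq: "y \<in> qv j x \<Longrightarrow> qv j y = qv j x"
  unfolding qv_def using cls_eq by auto

lemma comp_bound:
  assumes j: "j \<in> J" and f0: "\<And>y. y \<in> V \<Longrightarrow> 0 \<le> f y" and c0: "0 < c"
  defines "F \<equiv> (\<lambda>x. if x \<in> V then f x else c)"
  shows "(\<Sum>x\<in>X. ent (cls (Dj j) x) F)
     \<le> (\<Sum>y\<in>V. f y * ln (f y / avg (qv j y) f) + 32 * sqrt (eps j) * psi (avg (qv j y) f) c)"
proof -
  define d where "d = 32 * sqrt (eps j)"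
  define G where "G y = (if y \<in> V then f y * ln (f y / avg (qv j y) f) + d * psi (avg (qv j y) f) c else 0)" for y
  have F0: "\<And>x. 0 \<le> F x" unfolding F_def using f0 c0 by (simp add: less_imp_le)
  have pw: "ent (cls (Dj j) x) F \<le> (\<Sum>y\<in>cls (Dj j) x. G y) / real (card (cls (Dj j) x))"
    if x: "x \<in> X" for x
  proof -
    define Q where "Q = cls (Dj j) x"
    define A where "A = qv j x"
    have finQ: "finite Q" unfolding Q_def by (rule cls_fin[OF j])
    have "x \<in> Q" unfolding Q_def by simp
    then have cQ: "0 < real (card Q)" using finQ by (auto simp: card_gt_0_iff)
    have AQ: "A = Q \<inter> V" unfolding A_def Q_def qv_def ..
    have finA: "finite A" using finQ AQ by simp
    have sumG: "(\<Sum>y\<in>Q. G y) = real (card A) * ent A f + d * (real (card A) * psi (avg A f) c)"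
    proof -
      have "(\<Sum>y\<in>Q. G y) = (\<Sum>y\<in>A. G y)"
        unfolding AQ G_def using finQ by (simp add: sum.inter_restrict[symmetric] if_distrib cong: if_cong)
      also have "\<dots> = (\<Sum>y\<in>A. f y * ln (f y / avg A f) + d * psi (avg A f) c)"
      proof (rule sum.cong)
        fix y assume y: "y \<in> A"
        then have "qv j y = A" unfolding A_def by (rule qv_eq)
        then show "G y = f y * ln (f y / avg A f) + d * psi (avg A f) c" using y AQ unfolding G_def by simp
      qed simp
      also have "\<dots> = real (card A) * ent A f + d * (real (card A) * psi (avg A f) c)"
        unfolding card_ent by (simp add: sum.distrib sum_distrib_left)
      finally show ?thesis .
    qed
    show ?thesis
    proof (cases "A = {}")
      case True
      then have "ent Q F = 0" by (intro ent_const[of Q F c]) (use AQ in \<open>auto simp: F_def\<close>)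
      moreover have "(\<Sum>y\<in>Q. G y) = 0" using sumG True by simp
      ultimately show ?thesis unfolding Q_def by simp
    next
      case False
      have Ane: "qv j x \<noteq> {}" using False A_def by simp
      have cp1: "real (card (Q - V)) \<le> eps j * real (card Q)" unfolding Q_def by (rule comp_props(1)[OF j x Ane])
      have cp2: "card (Q - V) \<le> card (Q \<inter> V)" unfolding Q_def by (rule comp_props(2)[OF j x Ane])
      have QA: "Q - A = Q - V" using AQ by auto
      have cA: "0 < card A" using False finA by (simp add: card_gt_0_iff)
      have L: "real (card Q) * ent Q F \<le> real (card A) * ent A F
           + 32 * sqrt (real (card (Q - A)) / real (card Q)) * real (card A) * psi (avg A F) c"
        by (rule ent_local_bound[OF finQ _ _ c0]) (use AQ F0 cA cp2 QA in \<open>auto simp: F_def\<close>)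
      have eA: "ent A F = ent A f" by (rule ent_cong) (use AQ in \<open>auto simp: F_def\<close>)
      have aA: "avg A F = avg A f" by (rule avg_cong) (use AQ in \<open>auto simp: F_def\<close>)
      have psi0: "0 \<le> psi (avg A f) c" by (rule psi_nonneg[OF _ c0]) (rule avg_nonneg, use AQ f0 in auto)
      have "sqrt (real (card (Q - A)) / real (card Q)) \<le> sqrt (eps j)"
      proof -
        have "real (card (Q - A)) / real (card Q) \<le> eps j" using cp1 cQ QA by (simp add: field_simps)
        then show ?thesis by simp
      qed
      then have "32 * sqrt (real (card (Q - A)) / real (card Q)) * real (card A) * psi (avg A f) c
          \<le> d * (real (card A) * psi (avg A f) c)"
        unfolding d_def using psi0 by (simp add: mult_right_mono mult.assoc)
      moreover note L[unfolded eA aA]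
      ultimately have "real (card Q) * ent Q F \<le> (\<Sum>y\<in>Q. G y)" using sumG by linarith
      then show ?thesis unfolding Q_def using cQ[unfolded Q_def] by (simp add: field_simps)
    qed
  qed
  have "(\<Sum>x\<in>X. ent (cls (Dj j) x) F) \<le> (\<Sum>x\<in>X. (\<Sum>y\<in>cls (Dj j) x. G y) / real (card (cls (Dj j) x)))"
    by (rule sum_mono) (rule pw)
  also have "\<dots> = (\<Sum>x\<in>X. G x)"
  proof (rule swap_cls[OF finX])
    show "\<And>x. x \<in> X \<Longrightarrow> x \<in> cls (Dj j) x" by simp
    show "\<And>x. x \<in> X \<Longrightarrow> cls (Dj j) x \<subseteq> X" unfolding X_def by (rule cls_mono[OF Dj_sub[OF j]])
    show "\<And>x y. x \<in> X \<Longrightarrow> y \<in> cls (Dj j) x \<Longrightarrow> cls (Dj j) y = cls (Dj j) x" by (rule cls_eq)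
  qed
  also have "\<dots> = (\<Sum>x\<in>V. G x)"
    using sum.subset_diff[OF VX finX, of G] by (simp add: G_def)
  also have "\<dots> = (\<Sum>y\<in>V. f y * ln (f y / avg (qv j y) f) + 32 * sqrt (eps j) * psi (avg (qv j y) f) c)"
    unfolding G_def d_def by simp
  finally show ?thesis .
qed


lemma qv_refl: "y \<in> V \<Longrightarrow> y \<in> qv j y" unfolding qv_def by simp
lemma qv_sub: "qv j y \<subseteq> V" unfolding qv_def by simp
lemma qv_fin: "j \<in> J \<Longrightarrow> finite (qv j y)" unfolding qv_def using cls_fin by auto

lemma swapV:
  assumes j: "j \<in> J"
  shows "(\<Sum>y\<in>V. (\<Sum>z\<in>qv j y. h z) / real (card (qv j y))) = (\<Sum>y\<in>V. h y)"
  by (rule swap_cls[OF finV]) (auto simp: qv_refl qv_eq qv_sub[of j, THEN subsetD])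

lemma E1_eq:
  assumes j: "j \<in> J"
  shows "(\<Sum>y\<in>V. f y * ln (f y / avg (qv j y) f)) = (\<Sum>y\<in>V. ent (qv j y) f)"
proof -
  have "(\<Sum>y\<in>V. ent (qv j y) f) = (\<Sum>y\<in>V. (\<Sum>z\<in>qv j y. f z * ln (f z / avg (qv j z) f)) / real (card (qv j y)))"
  proof (rule sum.cong)
    fix y assume "y \<in> V"
    have "(\<Sum>z\<in>qv j y. f z * ln (f z / avg (qv j y) f)) = (\<Sum>z\<in>qv j y. f z * ln (f z / avg (qv j z) f))"
      by (rule sum.cong) (auto simp: qv_eq)
    then show "ent (qv j y) f = (\<Sum>z\<in>qv j y. f z * ln (f z / avg (qv j z) f)) / real (card (qv j y))"
      unfolding ent_def by simp
  qed simp
  also have "\<dots> = (\<Sum>y\<in>V. f y * ln (f y / avg (qv j y) f))" by (rule swapV[OF j])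
  finally show ?thesis by simp
qed

lemma psi_sum:
  assumes j: "j \<in> J" and f0: "\<And>y. y \<in> V \<Longrightarrow> 0 \<le> f y" and c: "c = avg V f" and c0: "0 < c"
  shows "(\<Sum>y\<in>V. psi (avg (qv j y) f) c) = real (card V) * ent V f - (\<Sum>y\<in>V. f y * ln (f y / avg (qv j y) f))"
proof -
  define a where "a y = avg (qv j y) f" for y
  have S1: "(\<Sum>y\<in>V. a y) = (\<Sum>y\<in>V. f y)" unfolding a_def avg_def by (rule swapV[OF j])
  have S2: "(\<Sum>y\<in>V. a y * ln (a y / c)) = (\<Sum>y\<in>V. f y * ln (a y / c))"
  proof -
    have "(\<Sum>y\<in>V. a y * ln (a y / c)) = (\<Sum>y\<in>V. (\<Sum>z\<in>qv j y. f z * ln (a z / c)) / real (card (qv j y)))"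
    proof (rule sum.cong)
      fix y assume "y \<in> V"
      have "(\<Sum>z\<in>qv j y. f z * ln (a z / c)) = (\<Sum>z\<in>qv j y. f z * ln (a y / c))"
        by (rule sum.cong) (auto simp: a_def qv_eq)
      then show "a y * ln (a y / c) = (\<Sum>z\<in>qv j y. f z * ln (a z / c)) / real (card (qv j y))"
        unfolding a_def avg_def by (simp add: sum_distrib_right)
    qed simp
    also have "\<dots> = (\<Sum>y\<in>V. f y * ln (a y / c))" by (rule swapV[OF j])
    finally show ?thesis .
  qed
  have S3: "(\<Sum>y\<in>V. f y * ln (f y / c)) = (\<Sum>y\<in>V. f y * ln (f y / a y)) + (\<Sum>y\<in>V. f y * ln (a y / c))"
  proof -
    have "f y * ln (f y / c) = f y * ln (f y / a y) + f y * ln (a y / c)" if y: "y \<in> V" for y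
    proof (rule mul_ln_split)
      show "0 \<le> f y" using f0 y .
      show "0 < f y \<Longrightarrow> 0 < a y" unfolding a_def
        by (rule avg_pos[OF qv_fin[OF j]]) (use f0 qv_sub qv_refl y in auto)
      show "0 < f y \<Longrightarrow> 0 < c" using c0 .
    qed
    then show ?thesis by (simp add: sum.distrib[symmetric])
  qed
  have T: "real (card V) * ent V f = (\<Sum>y\<in>V. f y * ln (f y / c))" unfolding card_ent c ..
  have cc: "real (card V) * c = (\<Sum>y\<in>V. f y)" unfolding c card_eq_sum_avg ..
  have "(\<Sum>y\<in>V. psi (a y) c) = (\<Sum>y\<in>V. a y * ln (a y / c)) - (\<Sum>y\<in>V. a y) + real (card V) * c"
    unfolding psi_def by (simp add: sum.distrib sum_subtractf)
  also have "\<dots> = (\<Sum>y\<in>V. f y * ln (a y / c))" unfolding S1 S2 cc by simp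
  also have "\<dots> = real (card V) * ent V f - (\<Sum>y\<in>V. f y * ln (f y / a y))" unfolding T S3 by simp
  finally show ?thesis unfolding a_def .
qed

lemma eps_sum: "(\<Sum>j\<in>J. 32 * sqrt (eps j)) \<le> 1/2"
proof -
  have "(\<Sum>j\<in>J. 32 * sqrt (eps j)) = (\<Sum>a\<in>{..<p} \<times> {..<k}. 32 * sqrt (real (k - 1) / 2 ^ w))"
    unfolding J_def using Cfin by (simp add: sum.Plus eps_def comp_def case_prod_beta)
  also have "\<dots> = real p * real k * (32 * sqrt (real (k - 1) / 2 ^ w))" by simp
  also have "\<dots> \<le> 1/2"
  proof (cases "p = 0")
    case True then show ?thesis by simp
  next
    case False
    then have p0: "0 < p" by simp
    have N: "(64 * real p * real k)^2 * real k \<le> 2 ^ w" using num_p(1)[OF p0] .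
    have pk: "0 < 64 * real p * real k" using p0 k0 by simp
    have "real (k - 1) / 2 ^ w \<le> real k / 2 ^ w" by (intro divide_right_mono) auto
    also have "\<dots> \<le> 1 / (64 * real p * real k)^2"
    proof -
      have Mp: "0 < (64 * real p * real k)^2" using p0 k0 by simp
      have "real k \<le> 2 ^ w / (64 * real p * real k)^2" using N Mp by (simp add: le_divide_eq mult.commute)
      then have "real k / 2 ^ w \<le> (2 ^ w / (64 * real p * real k)^2) / 2 ^ w" by (rule divide_right_mono) simp
      also have "\<dots> = 1 / (64 * real p * real k)^2" by simp
      finally show ?thesis .
    qed
    finally have "sqrt (real (k - 1) / 2 ^ w) \<le> sqrt (1 / (64 * real p * real k)^2)" by simp
    also have "\<dots> = 1 / (64 * real p * real k)"
    proof -
      have "sqrt ((64 * real p * real k)^2) = 64 * real p * real k" by (simp only: real_sqrt_abs abs_of_pos[OF pk])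
      then show ?thesis by (simp only: real_sqrt_divide real_sqrt_one)
    qed
    finally have "real p * real k * (32 * sqrt (real (k - 1) / 2 ^ w)) \<le> real p * real k * (32 * (1 / (64 * real p * real k)))"
      using p0 k0 by (intro mult_left_mono) auto
    also have "\<dots> = 1/2"
    proof -
      define q where "q = real p * real k"
      have q0: "0 < q" unfolding q_def using p0 k0 by simp
      have "real p * real k * (32 * (1 / (64 * real p * real k))) = q * (32 * (1 / (64 * q)))"
        unfolding q_def by (simp add: mult.assoc)
      also have "\<dots> = 1/2" using q0 by simp
      finally show ?thesis .
    qed
    finally show ?thesis .
  qed
  finally show ?thesis .
qed

lemma ent_main:
  assumes f0: "\<And>y. y \<in> V \<Longrightarrow> 0 \<le> f y" and c0: "0 < avg V f"
  shows "real (card V) * ent V f \<le> 2 * (\<Sum>j\<in>J. \<Sum>y\<in>V. ent (qv j y) f)"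
proof -
  define c where "c = avg V f"
  define F where "F = (\<lambda>x. if x \<in> V then f x else c)"
  have cp: "0 < c" unfolding c_def by (rule c0)
  have F0: "\<And>x. 0 \<le> F x" unfolding F_def using f0 cp by (simp add: less_imp_le)
  define T where "T = real (card V) * ent V f"
  define E1 where "E1 j = (\<Sum>y\<in>V. f y * ln (f y / avg (qv j y) f))" for j
  have T0: "0 \<le> T" unfolding T_def using ent_nonneg[OF finV f0] by simp
  have E10: "0 \<le> E1 j" if "j \<in> J" for j unfolding E1_def E1_eq[OF that]
    by (rule sum_nonneg) (rule ent_nonneg[OF qv_fin[OF that]], use f0 qv_sub in auto)
  have s1: "T \<le> real (card X) * ent X F"
  proof -
    have "ent V F = ent V f" by (rule ent_cong) (simp add: F_def)
    then show ?thesis unfolding T_def using ent_subset_le[OF finX VX, of F] F0 by simp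
  qed
  have s2: "ent X F \<le> (\<Sum>j\<in>J. avg X (\<lambda>x. ent (cls (Dj j) x) F))"
    unfolding X_def Dj_Union[symmetric] by (rule tensor[OF finJ _ Dj_disj F0]) (use Dj_fin in auto)
  have s3: "real (card X) * avg X (\<lambda>x. ent (cls (Dj j) x) F) \<le> E1 j + 32 * sqrt (eps j) * T"
    if j: "j \<in> J" for j
  proof -
    have "real (card X) * avg X (\<lambda>x. ent (cls (Dj j) x) F) = (\<Sum>x\<in>X. ent (cls (Dj j) x) F)"
      by (rule card_eq_sum_avg)
    also have "\<dots> \<le> (\<Sum>y\<in>V. f y * ln (f y / avg (qv j y) f) + 32 * sqrt (eps j) * psi (avg (qv j y) f) c)"
      unfolding F_def by (rule comp_bound[OF j f0 cp])
    also have "\<dots> = E1 j + 32 * sqrt (eps j) * (T - E1 j)"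
    proof -
      have P: "(\<Sum>y\<in>V. psi (avg (qv j y) f) c) = T - E1 j"
        unfolding E1_def T_def by (rule psi_sum[OF j f0 c_def cp])
      have "(\<Sum>y\<in>V. f y * ln (f y / avg (qv j y) f) + 32 * sqrt (eps j) * psi (avg (qv j y) f) c)
        = (\<Sum>y\<in>V. f y * ln (f y / avg (qv j y) f)) + 32 * sqrt (eps j) * (\<Sum>y\<in>V. psi (avg (qv j y) f) c)"
        by (simp add: sum.distrib sum_distrib_left)
      then show ?thesis unfolding P E1_def .
    qed
    also have "\<dots> \<le> E1 j + 32 * sqrt (eps j) * T"
    proof -
      have "0 \<le> eps j" unfolding eps_def by (cases j) auto
      then have d0: "0 \<le> 32 * sqrt (eps j)" by simp
      have "32 * sqrt (eps j) * (T - E1 j) = 32 * sqrt (eps j) * T - 32 * sqrt (eps j) * E1 j"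
        by (simp add: algebra_simps)
      moreover have "0 \<le> 32 * sqrt (eps j) * E1 j" using d0 E10[OF j] by simp
      ultimately show ?thesis by linarith
    qed
    finally show ?thesis .
  qed
  have "T \<le> real (card X) * (\<Sum>j\<in>J. avg X (\<lambda>x. ent (cls (Dj j) x) F))"
    using s1 s2 by (meson mult_left_mono of_nat_0_le_iff order_trans)
  also have "\<dots> = (\<Sum>j\<in>J. real (card X) * avg X (\<lambda>x. ent (cls (Dj j) x) F))" by (simp add: sum_distrib_left)
  also have "\<dots> \<le> (\<Sum>j\<in>J. E1 j + 32 * sqrt (eps j) * T)" by (rule sum_mono) (rule s3)
  also have "\<dots> = (\<Sum>j\<in>J. E1 j) + (\<Sum>j\<in>J. 32 * sqrt (eps j)) * T" by (simp add: sum.distrib sum_distrib_right)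
  also have "\<dots> \<le> (\<Sum>j\<in>J. E1 j) + 1/2 * T"
    using mult_right_mono[OF eps_sum T0] by simp
  finally have "T \<le> 2 * (\<Sum>j\<in>J. E1 j)" by simp
  also have "(\<Sum>j\<in>J. E1 j) = (\<Sum>j\<in>J. \<Sum>y\<in>V. ent (qv j y) f)" unfolding E1_def by (rule sum.cong) (auto simp: E1_eq)
  finally show ?thesis unfolding T_def .
qed


definition SL :: "(tup \<Rightarrow> real) \<Rightarrow> real" where
  "SL g = (\<Sum>a\<in>{..<p} \<times> {..<k}. \<Sum>x\<in>V. var (qv (Inl a) x) g)"
definition SR :: "(tup \<Rightarrow> real) \<Rightarrow> real" where
  "SR g = (\<Sum>a\<in>C \<times> {..<k}. \<Sum>x\<in>V. var (qv (Inr a) x) g)"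

lemma SL_nonneg: "0 \<le> SL g" unfolding SL_def by (intro sum_nonneg var_nonneg)
lemma SR_nonneg: "0 \<le> SR g" unfolding SR_def by (intro sum_nonneg var_nonneg)

lemma qv_card_inl:
  assumes "a \<in> {..<p} \<times> {..<k}"
  shows "card (qv (Inl a) x) \<le> 2 ^ w"
proof -
  obtain l r where a: "a = (l, r)" "l < p" "r < k" using assms by auto
  have j: "Inl a \<in> J" using assms unfolding J_def by auto
  have "card (qv (Inl a) x) \<le> card (cls (Dj (Inl a)) x)"
    unfolding qv_def by (rule card_mono[OF cls_fin[OF j]]) auto
  also have "card (cls (Dj (Inl a)) x) = 2 ^ card (Dj (Inl a))" using cls_card Dj_fin[OF j] by auto
  also have "card (Dj (Inl a)) = w" using a Bcard by (simp add: card_cartesian_product)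
  finally show ?thesis .
qed

lemma qv_inr:
  assumes "a \<in> C \<times> {..<k}" and x: "x \<in> V"
  shows "qv (Inr a) x = {x, flip_bit x (snd a) (fst a)}"
proof -
  obtain c r where a: "a = (c, r)" "c \<in> C" "r < k" using assms by auto
  show ?thesis unfolding qv_def using inr_sub[OF a(2,3) x] inr_class[of c r x] a by auto
qed

lemma ent_SL_SR:
  assumes f0: "\<And>y. y \<in> V \<Longrightarrow> 0 \<le> f y" and c0: "0 < avg V f"
  shows "real (card V) * ent V f \<le> 2 * ((6 + 2 * real w) * SL (\<lambda>x. sqrt (f x)) + 8 * SR (\<lambda>x. sqrt (f x)))"
proof -
  define g where "g x = sqrt (f x)" for x
  have loc: "ent (qv j y) f \<le> (6 + 2 * ln (real (card (qv j y)))) * var (qv j y) g" if "j \<in> J" "y \<in> V" for j y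
  proof -
    have ne: "qv j y \<noteq> {}" using qv_refl[OF that(2), of j] by auto
    have nn: "\<And>x. x \<in> qv j y \<Longrightarrow> 0 \<le> f x" using f0 qv_sub by blast
    show ?thesis unfolding g_def by (rule local_LS[OF qv_fin[OF that(1)] ne nn])
  qed
  have "real (card V) * ent V f \<le> 2 * (\<Sum>j\<in>J. \<Sum>y\<in>V. ent (qv j y) f)" by (rule ent_main[OF f0 c0])
  also have "(\<Sum>j\<in>J. \<Sum>y\<in>V. ent (qv j y) f)
      = (\<Sum>a\<in>{..<p} \<times> {..<k}. \<Sum>y\<in>V. ent (qv (Inl a) y) f) + (\<Sum>a\<in>C \<times> {..<k}. \<Sum>y\<in>V. ent (qv (Inr a) y) f)"
    unfolding J_def using Cfin by (simp add: sum.Plus comp_def)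
  also have "(\<Sum>a\<in>{..<p} \<times> {..<k}. \<Sum>y\<in>V. ent (qv (Inl a) y) f) \<le> (6 + 2 * real w) * SL g"
  proof -
    have "(\<Sum>a\<in>{..<p} \<times> {..<k}. \<Sum>y\<in>V. ent (qv (Inl a) y) f)
        \<le> (\<Sum>a\<in>{..<p} \<times> {..<k}. \<Sum>y\<in>V. (6 + 2 * real w) * var (qv (Inl a) y) g)"
    proof (intro sum_mono)
      fix a y assume a: "a \<in> {..<p} \<times> {..<k}" and y: "y \<in> V"
      have j: "Inl a \<in> J" using a unfolding J_def by auto
      have "ent (qv (Inl a) y) f \<le> (6 + 2 * ln (real (card (qv (Inl a) y)))) * var (qv (Inl a) y) g"
        by (rule loc[OF j y])
      also have "\<dots> \<le> (6 + 2 * real w) * var (qv (Inl a) y) g"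
      proof (rule mult_right_mono[OF _ var_nonneg])
        have cp: "0 < card (qv (Inl a) y)" using qv_fin[OF j] qv_refl[OF y] by (auto simp: card_gt_0_iff)
        have "ln (real (card (qv (Inl a) y))) \<le> ln (2 ^ w)"
          using qv_card_inl[OF a, of y] cp by (subst ln_le_cancel_iff) (auto simp: of_nat_le_iff[symmetric])
        also have "ln ((2::real) ^ w) = real w * ln 2" by (simp add: ln_realpow)
        also have "\<dots> \<le> real w" using ln_2_less_1 by (simp add: mult_left_le)
        finally show "6 + 2 * ln (real (card (qv (Inl a) y))) \<le> 6 + 2 * real w" by simp
      qed
      finally show "ent (qv (Inl a) y) f \<le> (6 + 2 * real w) * var (qv (Inl a) y) g" .
    qed
    also have "\<dots> = (6 + 2 * real w) * SL g" unfolding SL_def by (simp add: sum_distrib_left)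
    finally show ?thesis .
  qed
  also have "(\<Sum>a\<in>C \<times> {..<k}. \<Sum>y\<in>V. ent (qv (Inr a) y) f) \<le> 8 * SR g"
  proof -
    have "(\<Sum>a\<in>C \<times> {..<k}. \<Sum>y\<in>V. ent (qv (Inr a) y) f)
        \<le> (\<Sum>a\<in>C \<times> {..<k}. \<Sum>y\<in>V. 8 * var (qv (Inr a) y) g)"
    proof (intro sum_mono)
      fix a y assume a: "a \<in> C \<times> {..<k}" and y: "y \<in> V"
      have j: "Inr a \<in> J" using a unfolding J_def by auto
      have "ent (qv (Inr a) y) f \<le> (6 + 2 * ln (real (card (qv (Inr a) y)))) * var (qv (Inr a) y) g"
        by (rule loc[OF j y])
      also have "\<dots> \<le> 8 * var (qv (Inr a) y) g"
      proof (rule mult_right_mono[OF _ var_nonneg])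
        have "card (qv (Inr a) y) = 2" unfolding qv_inr[OF a y] using flip_ne[of y "snd a" "fst a"] by (auto simp: card_insert_if)
        then show "6 + 2 * ln (real (card (qv (Inr a) y))) \<le> 8" using ln_2_less_1 by simp
      qed
      finally show "ent (qv (Inr a) y) f \<le> 8 * var (qv (Inr a) y) g" .
    qed
    also have "\<dots> = 8 * SR g" unfolding SR_def by (simp add: sum_distrib_left)
    finally show ?thesis .
  qed
  finally show ?thesis unfolding g_def by simp
qed

end


lemma count_sum:
  assumes fA: "finite A" and fT: "finite T" and img: "\<And>a. a \<in> A \<Longrightarrow> phi a \<in> T"
  shows "(\<Sum>y\<in>T. h y * real (card {a \<in> A. phi a = y})) = (\<Sum>a\<in>A. h (phi a))"
proof -
  have "(\<Sum>a\<in>A. h (phi a)) = (\<Sum>y\<in>T. \<Sum>a\<in>{a. a \<in> A \<and> phi a = y}. h (phi a))"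
    by (rule sum.group[symmetric]) (use fA fT img in auto)
  also have "\<dots> = (\<Sum>y\<in>T. h y * real (card {a \<in> A. phi a = y}))"
  proof (rule sum.cong)
    fix y assume "y \<in> T"
    have "(\<Sum>a\<in>{a. a \<in> A \<and> phi a = y}. h (phi a)) = (\<Sum>a\<in>{a. a \<in> A \<and> phi a = y}. h y)"
      by (rule sum.cong) auto
    then show "(\<Sum>a\<in>{a. a \<in> A \<and> phi a = y}. h (phi a)) = h y * real (card {a \<in> A. phi a = y})"
      by (simp add: mult.commute)
  qed simp
  finally show ?thesis by simp
qed

context genctx
begin

definition T2 :: "(tup \<Rightarrow> real) \<Rightarrow> tup \<Rightarrow> real" where
  "T2 g x = (\<Sum>a\<in>C \<times> {..<k}. (g x - g (flip_bit x (snd a) (fst a)))^2)"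
definition T3 :: "(tup \<Rightarrow> real) \<Rightarrow> tup \<Rightarrow> real" where
  "T3 g x = (\<Sum>l<p. \<Sum>r<k. (\<Sum>y\<in>repl_set k B x l r. (g x - g y)^2) / real (card (repl_set k B x l r)))"

lemma flip_in_V: "x \<in> V \<Longrightarrow> c \<in> C \<Longrightarrow> r < k \<Longrightarrow> flip_bit x r c \<in> V"
  using inr_sub[of c r x] inr_class[of c r x] by auto

lemma repl_sub_V: "x \<in> V \<Longrightarrow> l < p \<Longrightarrow> r < k \<Longrightarrow> repl_set k B x l r \<subseteq> V"
  using inl_class[of l r x] by auto

lemma P_row:
  assumes x: "x \<in> V"
  shows "(\<Sum>y\<in>V. (g x - g y)^2 * P_grev k n B C x y)
    = (1/4) * T2 g x / (real (card C) * real k) + (1/2) * T3 g x / (real p * real k)"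
proof -
  define S where "S y = {(c, r). c \<in> C \<and> r < k \<and> flip_bit x r c = y}" for y
  define ind where "ind y = (\<Sum>l<p. \<Sum>r<k. if y \<in> repl_set k B x l r then 1 / real (card (repl_set k B x l r)) else 0)" for y
  have P: "P_grev k n B C x y = (if x = y then 1/4 else 0) + (1/4) * real (card (S y)) / (real (card C) * real k)
      + (1/2) * ind y / (real p * real k)" for y
    unfolding P_grev_def S_def ind_def ..
  have A: "(\<Sum>y\<in>V. (g x - g y)^2 * (if x = y then 1/4 else 0)) = 0"
    by (rule sum.neutral) auto
  have Bp: "(\<Sum>y\<in>V. (g x - g y)^2 * ((1/4) * real (card (S y)) / (real (card C) * real k)))
      = (1/4) * T2 g x / (real (card C) * real k)"
  proof -
    have SS: "S y = {a \<in> C \<times> {..<k}. flip_bit x (snd a) (fst a) = y}" for y unfolding S_def by auto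
    have "(\<Sum>y\<in>V. (g x - g y)^2 * real (card (S y))) = T2 g x"
      unfolding SS T2_def
      by (rule count_sum) (use Cfin finV flip_in_V[OF x] in auto)
    then show ?thesis by (simp add: sum_distrib_left[symmetric] sum_divide_distrib[symmetric] algebra_simps)
  qed
  have Cp: "(\<Sum>y\<in>V. (g x - g y)^2 * ((1/2) * ind y / (real p * real k)))
      = (1/2) * T3 g x / (real p * real k)"
  proof -
    have "(\<Sum>y\<in>V. (g x - g y)^2 * ind y) = T3 g x"
    proof -
      have "(\<Sum>y\<in>V. (g x - g y)^2 * ind y)
          = (\<Sum>l<p. \<Sum>r<k. \<Sum>y\<in>V. (g x - g y)^2 * (if y \<in> repl_set k B x l r then 1 / real (card (repl_set k B x l r)) else 0))"
        unfolding ind_def by (simp add: sum_distrib_left sum.swap[of _ V])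
      also have "\<dots> = T3 g x" unfolding T3_def
      proof (intro sum.cong refl)
        fix l r assume l: "l \<in> {..<p}" and r: "r \<in> {..<k}"
        have sub: "repl_set k B x l r \<subseteq> V" using repl_sub_V[OF x] l r by auto
        have "(\<Sum>y\<in>V. (g x - g y)^2 * (if y \<in> repl_set k B x l r then 1 / real (card (repl_set k B x l r)) else 0))
            = (\<Sum>y\<in>repl_set k B x l r. (g x - g y)^2 / real (card (repl_set k B x l r)))"
          using sum.inter_restrict[OF finV, of "\<lambda>y. (g x - g y)^2 / real (card (repl_set k B x l r))" "repl_set k B x l r"] sub
          by (simp add: Int_absorb1 Int_commute if_distrib cong: if_cong)
        also have "\<dots> = (\<Sum>y\<in>repl_set k B x l r. (g x - g y)^2) / real (card (repl_set k B x l r))"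
          by (simp add: sum_divide_distrib)
        finally show "(\<Sum>y\<in>V. (g x - g y)^2 * (if y \<in> repl_set k B x l r then 1 / real (card (repl_set k B x l r)) else 0))
            = (\<Sum>y\<in>repl_set k B x l r. (g x - g y)^2) / real (card (repl_set k B x l r))" .
      qed
      finally show ?thesis .
    qed
    then show ?thesis by (simp add: sum_distrib_left[symmetric] sum_divide_distrib[symmetric] algebra_simps)
  qed
  have "(\<Sum>y\<in>V. (g x - g y)^2 * P_grev k n B C x y)
      = (\<Sum>y\<in>V. (g x - g y)^2 * (if x = y then 1/4 else 0))
      + (\<Sum>y\<in>V. (g x - g y)^2 * ((1/4) * real (card (S y)) / (real (card C) * real k)))
      + (\<Sum>y\<in>V. (g x - g y)^2 * ((1/2) * ind y / (real p * real k)))"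
    unfolding P by (simp add: sum.distrib distrib_left)
  then show ?thesis unfolding A Bp Cp by simp
qed


lemma var_two: "x \<noteq> x' \<Longrightarrow> var {x, x'} g = (g x - g x')^2 / 4"
  unfolding var_def by (simp add: power2_commute)

lemma sumT2: "(\<Sum>x\<in>V. T2 g x) = 4 * SR g"
proof -
  have "(\<Sum>x\<in>V. T2 g x) = (\<Sum>a\<in>C \<times> {..<k}. \<Sum>x\<in>V. (g x - g (flip_bit x (snd a) (fst a)))^2)"
    unfolding T2_def by (rule sum.swap)
  also have "\<dots> = (\<Sum>a\<in>C \<times> {..<k}. \<Sum>x\<in>V. 4 * var (qv (Inr a) x) g)"
  proof (intro sum.cong refl)
    fix a x assume a: "a \<in> C \<times> {..<k}" and x: "x \<in> V"
    have ne: "x \<noteq> flip_bit x (snd a) (fst a)" using flip_ne[of x "snd a" "fst a"] by auto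
    show "(g x - g (flip_bit x (snd a) (fst a)))^2 = 4 * var (qv (Inr a) x) g"
      unfolding qv_inr[OF a x] var_two[OF ne] by simp
  qed
  also have "\<dots> = 4 * SR g" unfolding SR_def by (simp add: sum_distrib_left)
  finally show ?thesis .
qed

lemma sumT3: "(\<Sum>x\<in>V. T3 g x) = 2 * SL g"
proof -
  have "(\<Sum>x\<in>V. T3 g x) = (\<Sum>a\<in>{..<p} \<times> {..<k}. \<Sum>x\<in>V. (\<Sum>y\<in>qv (Inl a) x. (g x - g y)^2) / real (card (qv (Inl a) x)))"
  proof -
    have "(\<Sum>x\<in>V. T3 g x) = (\<Sum>l<p. \<Sum>r<k. \<Sum>x\<in>V. (\<Sum>y\<in>repl_set k B x l r. (g x - g y)^2) / real (card (repl_set k B x l r)))"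
      unfolding T3_def by (simp add: sum.swap[of _ V])
    also have "\<dots> = (\<Sum>(l, r)\<in>{..<p} \<times> {..<k}. \<Sum>x\<in>V. (\<Sum>y\<in>repl_set k B x l r. (g x - g y)^2) / real (card (repl_set k B x l r)))"
      by (rule sum.cartesian_product)
    also have "\<dots> = (\<Sum>a\<in>{..<p} \<times> {..<k}. \<Sum>x\<in>V. (\<Sum>y\<in>qv (Inl a) x. (g x - g y)^2) / real (card (qv (Inl a) x)))"
    proof (rule sum.cong[OF refl])
      fix a assume a: "a \<in> {..<p} \<times> {..<k}"
      obtain l r where lr: "a = (l, r)" "l < p" "r < k" using a by auto
      show "(case a of (l, r) \<Rightarrow> \<Sum>x\<in>V. (\<Sum>y\<in>repl_set k B x l r. (g x - g y)^2) / real (card (repl_set k B x l r)))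
          = (\<Sum>x\<in>V. (\<Sum>y\<in>qv (Inl a) x. (g x - g y)^2) / real (card (qv (Inl a) x)))"
        unfolding lr(1) using inl_class[OF lr(2,3)] by (simp add: qv_def cong: sum.cong)
    qed
    finally show ?thesis .
  qed
  also have "\<dots> = (\<Sum>a\<in>{..<p} \<times> {..<k}. \<Sum>x\<in>V. 2 * var (qv (Inl a) x) g)"
  proof (rule sum.cong[OF refl])
    fix a assume a: "a \<in> {..<p} \<times> {..<k}"
    have j: "Inl a \<in> J" using a unfolding J_def by auto
    define h where "h z = (\<Sum>y\<in>qv (Inl a) z. (g z - g y)^2) / real (card (qv (Inl a) z))" for z
    have "(\<Sum>x\<in>V. h x) = (\<Sum>x\<in>V. (\<Sum>z\<in>qv (Inl a) x. h z) / real (card (qv (Inl a) x)))"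
      by (rule swapV[OF j, symmetric])
    also have "\<dots> = (\<Sum>x\<in>V. 2 * var (qv (Inl a) x) g)"
    proof (rule sum.cong[OF refl])
      fix x assume x: "x \<in> V"
      have "(\<Sum>z\<in>qv (Inl a) x. h z) = (\<Sum>z\<in>qv (Inl a) x. (\<Sum>y\<in>qv (Inl a) x. (g z - g y)^2) / real (card (qv (Inl a) x)))"
        unfolding h_def by (rule sum.cong) (auto simp: qv_eq)
      also have "\<dots> = (\<Sum>z\<in>qv (Inl a) x. \<Sum>y\<in>qv (Inl a) x. (g z - g y)^2) / real (card (qv (Inl a) x))"
        by (simp add: sum_divide_distrib)
      finally show "(\<Sum>z\<in>qv (Inl a) x. h z) / real (card (qv (Inl a) x)) = 2 * var (qv (Inl a) x) g"
        unfolding var_def by (simp add: power2_eq_square field_simps)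
    qed
    finally show "(\<Sum>x\<in>V. (\<Sum>y\<in>qv (Inl a) x. (g x - g y)^2) / real (card (qv (Inl a) x))) = (\<Sum>x\<in>V. 2 * var (qv (Inl a) x) g)"
      unfolding h_def .
  qed
  also have "\<dots> = 2 * SL g" unfolding SL_def by (simp add: sum_distrib_left)
  finally show ?thesis .
qed

lemma DF_eq:
  "dirichlet_form V (uniform_on V) (P_grev k n B C) g
     = (SR g / (real (card C) * real k) + SL g / (real p * real k)) / (2 * real (card V))"
proof -
  have "dirichlet_form V (uniform_on V) (P_grev k n B C) g
      = (1/2) * (\<Sum>x\<in>V. (1 / real (card V)) * (\<Sum>y\<in>V. (g x - g y)^2 * P_grev k n B C x y))"
    unfolding dirichlet_form_def uniform_on_def by (simp add: sum_distrib_left algebra_simps)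
  also have "\<dots> = (1/2) * (1 / real (card V)) * (\<Sum>x\<in>V. (1/4) * T2 g x / (real (card C) * real k) + (1/2) * T3 g x / (real p * real k))"
    by (simp add: P_row sum_distrib_left cong: sum.cong)
  also have "\<dots> = (1/2) * (1 / real (card V)) * ((1/4) * (\<Sum>x\<in>V. T2 g x) / (real (card C) * real k) + (1/2) * (\<Sum>x\<in>V. T3 g x) / (real p * real k))"
    by (simp add: sum.distrib sum_distrib_left sum_divide_distrib)
  also have "\<dots> = (SR g / (real (card C) * real k) + SL g / (real p * real k)) / (2 * real (card V))"
    unfolding sumT2 sumT3 by (simp add: field_simps)
  finally show ?thesis .
qed


definition Aset :: "nat \<Rightarrow> nat \<Rightarrow> nat \<Rightarrow> tup set" where
  "Aset l i i' = {x \<in> X. \<forall>j\<in>B l. x i j = x i' j}"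

lemma cardX: "card X = 2 ^ (k * n)"
  unfolding X_def using cls_card[OF finI] by (simp add: I_def card_cartesian_product)

lemma Aset_card:
  assumes l: "l < p" and i: "i < k" and i': "i' < k" and ii: "i \<noteq> i'"
  shows "real (card (Aset l i i')) * 2 ^ w \<le> real (card X)"
proof -
  define D where "D = {i'} \<times> B l"
  have finD: "finite D" unfolding D_def using Bfin[OF l] by simp
  have cD: "card D = w" unfolding D_def using Bcard[OF l] by (simp add: card_cartesian_product)
  have DI: "D \<subseteq> I" unfolding D_def I_def using i' Bsub[OF l] by auto
  have AX: "Aset l i i' \<subseteq> X" unfolding Aset_def by auto
  define h where "h y = (if y \<in> Aset l i i' then (1::real) else 0)" for y
  have "(\<Sum>x\<in>X. (\<Sum>y\<in>cls D x. h y) / real (card (cls D x))) = (\<Sum>x\<in>X. h x)"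
  proof (rule swap_cls[OF finX])
    show "\<And>x. x \<in> X \<Longrightarrow> x \<in> cls D x" by simp
    show "\<And>x. x \<in> X \<Longrightarrow> cls D x \<subseteq> X" unfolding X_def by (rule cls_mono[OF DI])
    show "\<And>x y. x \<in> X \<Longrightarrow> y \<in> cls D x \<Longrightarrow> cls D y = cls D x" by (rule cls_eq)
  qed
  moreover have "(\<Sum>x\<in>X. h x) = real (card (Aset l i i'))"
    unfolding h_def using AX finX by (simp add: sum.If_cases Int_absorb1 Int_commute)
  moreover have "(\<Sum>y\<in>cls D x. h y) \<le> 1" for x
  proof -
    have fin: "finite (cls D x \<inter> Aset l i i')" using cls_card[OF finD] by simp
    have "\<forall>a\<in>cls D x \<inter> Aset l i i'. \<forall>b\<in>cls D x \<inter> Aset l i i'. a = b"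
    proof (intro ballI)
      fix a b assume a: "a \<in> cls D x \<inter> Aset l i i'" and b: "b \<in> cls D x \<inter> Aset l i i'"
      have "a r j = b r j" for r j
      proof (cases "(r, j) \<in> D")
        case True
        then have rj: "r = i'" "j \<in> B l" unfolding D_def by auto
        have "(i, j) \<notin> D" unfolding D_def using ii by auto
        then have "a i j = x i j" "b i j = x i j" using a b unfolding cls_def by auto
        moreover have "a i j = a i' j" "b i j = b i' j" using a b rj unfolding Aset_def by auto
        ultimately show ?thesis using rj by simp
      next
        case False then show ?thesis using a b unfolding cls_def by auto
      qed
      then show "a = b" by (auto intro!: ext)
    qed
    then have "card (cls D x \<inter> Aset l i i') \<le> 1" using card_le_Suc0_iff_eq[OF fin] by simp
    moreover have "(\<Sum>y\<in>cls D x. h y) = real (card (cls D x \<inter> Aset l i i'))"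
      unfolding h_def using cls_card[OF finD] by (simp add: sum.If_cases)
    ultimately show ?thesis by simp
  qed
  ultimately have "real (card (Aset l i i')) \<le> (\<Sum>x\<in>X. 1 / 2 ^ w)"
  proof -
    assume e1: "(\<Sum>x\<in>X. (\<Sum>y\<in>cls D x. h y) / real (card (cls D x))) = (\<Sum>x\<in>X. h x)"
      and e2: "(\<Sum>x\<in>X. h x) = real (card (Aset l i i'))" and le: "\<And>x. (\<Sum>y\<in>cls D x. h y) \<le> 1"
    have "real (card (Aset l i i')) = (\<Sum>x\<in>X. (\<Sum>y\<in>cls D x. h y) / real (card (cls D x)))" using e1 e2 by simp
    also have "\<dots> \<le> (\<Sum>x\<in>X. 1 / 2 ^ w)"
    proof (rule sum_mono)
      fix x assume "x \<in> X"
      have "card (cls D x) = 2 ^ w" using cls_card[OF finD] cD by simp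
      then show "(\<Sum>y\<in>cls D x. h y) / real (card (cls D x)) \<le> 1 / 2 ^ w"
        using le[of x] by (simp add: divide_right_mono)
    qed
    finally show ?thesis .
  qed
  then show ?thesis by (simp add: field_simps)
qed

lemma XV_sub: "X - V \<subseteq> (\<Union>l\<in>{..<p}. \<Union>i\<in>{..<k}. \<Union>i'\<in>{..<k} - {i}. Aset l i i')"
proof
  fix x assume x: "x \<in> X - V"
  then obtain i i' t where "i < k" "i' < k" "i \<noteq> i'" "t < p" "\<forall>j\<in>B t. x i j = x i' j"
    using V_iff by auto
  then show "x \<in> (\<Union>l\<in>{..<p}. \<Union>i\<in>{..<k}. \<Union>i'\<in>{..<k} - {i}. Aset l i i')"
    using x unfolding Aset_def by blast
qed

lemma card_V_ge2: "2 \<le> card V"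
proof -
  have cX: "real (card X) = 2 ^ (k * n)" using cardX by simp
  have kn1: "1 \<le> k * n" using k0 n0 by simp
  show ?thesis
  proof (cases "p = 0")
    case True
    then have "X - V = {}" using XV_sub by auto
    then have "V = X" using VX by auto
    moreover have "(2::nat) ^ 1 \<le> 2 ^ (k * n)" using kn1 by (intro power_increasing) auto
    ultimately show ?thesis using cardX by simp
  next
    case False
    then have p0: "0 < p" by simp
    note N = numerics[OF n0 k0 wn p0]
    have "card (X - V) \<le> (\<Sum>l\<in>{..<p}. \<Sum>i\<in>{..<k}. \<Sum>i'\<in>{..<k} - {i}. card (Aset l i i'))"
    proof -
      have "card (X - V) \<le> card (\<Union>l\<in>{..<p}. \<Union>i\<in>{..<k}. \<Union>i'\<in>{..<k} - {i}. Aset l i i')"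
        by (rule card_mono[OF _ XV_sub]) (auto simp: Aset_def intro: finite_subset[OF _ finX])
      also have "\<dots> \<le> (\<Sum>l\<in>{..<p}. card (\<Union>i\<in>{..<k}. \<Union>i'\<in>{..<k} - {i}. Aset l i i'))" by (rule card_UN_le) simp
      also have "\<dots> \<le> (\<Sum>l\<in>{..<p}. \<Sum>i\<in>{..<k}. card (\<Union>i'\<in>{..<k} - {i}. Aset l i i'))"
        by (intro sum_mono card_UN_le) simp
      also have "\<dots> \<le> (\<Sum>l\<in>{..<p}. \<Sum>i\<in>{..<k}. \<Sum>i'\<in>{..<k} - {i}. card (Aset l i i'))"
        by (intro sum_mono card_UN_le) simp
      finally show ?thesis .
    qed
    then have "real (card (X - V)) \<le> (\<Sum>l\<in>{..<p}. \<Sum>i\<in>{..<k}. \<Sum>i'\<in>{..<k} - {i}. real (card (Aset l i i')))"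
      by (metis (mono_tags, lifting) of_nat_le_iff of_nat_sum sum.cong)
    also have "\<dots> \<le> (\<Sum>l\<in>{..<p}. \<Sum>i\<in>{..<k}. \<Sum>i'\<in>{..<k} - {i}. real (card X) / 2 ^ w)"
    proof (intro sum_mono)
      fix l i i' assume "l \<in> {..<p}" "i \<in> {..<k}" "i' \<in> {..<k} - {i}"
      then show "real (card (Aset l i i')) \<le> real (card X) / 2 ^ w"
        using Aset_card[of l i i'] by (simp add: field_simps)
    qed
    also have "\<dots> \<le> real p * real k * real k * (real (card X) / 2 ^ w)"
    proof -
      have "(\<Sum>l\<in>{..<p}. \<Sum>i\<in>{..<k}. \<Sum>i'\<in>{..<k} - {i}. real (card X) / 2 ^ w)
          = real p * (real k * (real (k - 1) * (real (card X) / 2 ^ w)))"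
        using k0 by (simp add: card_Diff_subset of_nat_diff)
      also have "\<dots> \<le> real p * (real k * (real k * (real (card X) / 2 ^ w)))"
        by (intro mult_left_mono mult_right_mono) auto
      finally show ?thesis by (simp add: mult.assoc)
    qed
    also have "\<dots> \<le> real (card X) / 2"
    proof -
      have "2 * real p * real k ^ 2 \<le> 2 ^ w" using num_p(2)[OF p0] .
      then have "real p * real k * real k / 2 ^ w \<le> 1/2" by (simp add: field_simps power2_eq_square)
      then have "real p * real k * real k / 2 ^ w * real (card X) \<le> 1/2 * real (card X)"
        by (rule mult_right_mono) simp
      then show ?thesis by (simp add: field_simps)
    qed
    finally have XV: "real (card (X - V)) \<le> real (card X) / 2" .
    have "card X = card (X - V) + card V" using card_Diff_subset[OF finV VX] card_mono[OF finX VX] by simp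
    then have "real (card X) / 2 \<le> real (card V)" using XV by simp
    moreover have "(2::real) ^ 2 \<le> 2 ^ (k * n)"
    proof -
      have "1 * 21 \<le> k * n" using mult_le_mono[of 1 k 21 n] N(3) k0 by simp
      then have "2 \<le> k * n" by simp
      then show ?thesis by (intro power_increasing) auto
    qed
    ultimately have "2 \<le> real (card V)" using cX by simp
    then show ?thesis by simp
  qed
qed

end


context genctx
begin

lemma main_ineq:
  assumes f0: "\<And>x. x \<in> V \<Longrightarrow> 0 \<le> f x" and x: "x \<in> V" and y: "y \<in> V" and ne: "f x \<noteq> f y"
  shows "ent V f \<le> 32 * real n * real k * dirichlet_form V (uniform_on V) (P_grev k n B C) (\<lambda>x. sqrt (f x))"
proof -
  define g where "g x = sqrt (f x)" for x
  have avgp: "0 < avg V f"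
  proof (cases "0 < f x")
    case True then show ?thesis using avg_pos[of V f x] finV f0 x by blast
  next
    case False
    then have "0 < f y" using f0[OF x] f0[OF y] ne by simp
    then show ?thesis using avg_pos[of V f y] finV f0 y by blast
  qed
  have cV: "0 < real (card V)" using finV x by (auto simp: card_gt_0_iff)
  have E: "real (card V) * ent V f \<le> 2 * ((6 + 2 * real w) * SL g + 8 * SR g)"
    unfolding g_def by (rule ent_SL_SR[OF f0 avgp])
  have DF: "dirichlet_form V (uniform_on V) (P_grev k n B C) g
     = (SR g / (real (card C) * real k) + SL g / (real p * real k)) / (2 * real (card V))" by (rule DF_eq)
  have R: "32 * real n * real k * real (card V) * dirichlet_form V (uniform_on V) (P_grev k n B C) g
      = 16 * real n * (SR g / real (card C)) + 16 * real n * (SL g / real p)"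
    unfolding DF using cV k0 by (simp add: field_simps)
  have i: "16 * SR g \<le> 16 * real n * (SR g / real (card C))"
  proof (cases "card C = 0")
    case True
    then have "C = {}" using Cfin by simp
    then have "SR g = 0" unfolding SR_def by simp
    then show ?thesis by simp
  next
    case False
    have "card C \<le> card {..<n}" by (rule card_mono[OF _ Csub]) simp
    then have cn: "real (card C) \<le> real n" by simp
    have c0: "0 < real (card C)" using False by simp
    have "SR g \<le> real n * (SR g / real (card C))"
    proof -
      have "SR g = real (card C) * (SR g / real (card C))" using c0 by simp
      also have "\<dots> \<le> real n * (SR g / real (card C))"
        by (rule mult_right_mono[OF cn]) (use SR_nonneg c0 in simp)
      finally show ?thesis .
    qed
    then show ?thesis by simp
  qed
  have ii: "2 * (6 + 2 * real w) * SL g \<le> 16 * real n * (SL g / real p)"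
  proof (cases "p = 0")
    case True
    then have "SL g = 0" unfolding SL_def by simp
    then show ?thesis by simp
  next
    case False
    then have p0: "0 < p" by simp
    note N = numerics[OF n0 k0 wn p0]
    have w1: "1 \<le> real w" using N(1) by simp
    have pl: "real p < real n / (2 * real w) + 1" using N(5) .
    have n2: "2 \<le> real n" using N(3) by simp
    have wn2: "2 * real w < real n" using wn by simp
    have "(12 + 4 * real w) * real p \<le> (12 + 4 * real w) * (real n / (2 * real w) + 1)"
      using pl by (intro mult_left_mono) auto
    also have "\<dots> = 6 * real n / real w + 2 * real n + 12 + 4 * real w" using w1 by (simp add: field_simps)
    also have "\<dots> \<le> 16 * real n"
    proof -
      have "6 * real n / real w \<le> 6 * real n" using w1 n2 by (simp add: divide_le_eq)
      then show ?thesis using wn2 n2 by linarith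
    qed
    finally have key: "(12 + 4 * real w) * real p \<le> 16 * real n" .
    have pp: "0 < real p" using p0 by simp
    have "2 * (6 + 2 * real w) * SL g = ((12 + 4 * real w) * real p) * (SL g / real p)"
      using pp by (simp add: field_simps)
    also have "\<dots> \<le> 16 * real n * (SL g / real p)"
      by (rule mult_right_mono[OF key]) (use SL_nonneg pp in simp)
    finally show ?thesis .
  qed
  have "real (card V) * ent V f \<le> real (card V) * (32 * real n * real k * dirichlet_form V (uniform_on V) (P_grev k n B C) g)"
    using E R i ii by (simp add: algebra_simps)
  then show ?thesis unfolding g_def using cV by simp
qed

end

lemma entropy_ent: "entropy V (uniform_on V) f = ent V f"
proof -
  have "(\<Sum>y\<in>V. uniform_on V y * f y) = avg V f"
    unfolding uniform_on_def avg_def by (simp add: sum_divide_distrib)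
  then show ?thesis unfolding entropy_def ent_def uniform_on_def
    by (simp add: sum_divide_distrib)
qed

theorem mainTheorem9:
  "\<exists>c::real > 0. \<forall>n k :: nat. \<forall>B :: nat \<Rightarrow> nat set. \<forall>C :: nat set.
     0 < n \<longrightarrow> 0 < k \<longrightarrow> real k \<le> 2 powr (real n / 50) \<longrightarrow>
     real (wpar k n) < real n / 2 \<longrightarrow>
     (\<forall>t<ppar k n. B t \<subseteq> {..<n} \<and> card (B t) = wpar k n) \<longrightarrow>
     (\<forall>t<ppar k n. \<forall>t'<ppar k n. t \<noteq> t' \<longrightarrow> B t \<inter> B t' = {}) \<longrightarrow>
     C = {..<n} - (\<Union>t<ppar k n. B t) \<longrightarrow>
     log_sobolev (generic_set k n B) (uniform_on (generic_set k n B)) (P_grev k n B C)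
       \<ge> c / (real n * real k)"
proof (rule exI[of _ "1/32"], intro conjI allI impI)
  show "(0::real) < 1/32" by simp
  fix n k :: nat and B :: "nat \<Rightarrow> nat set" and C :: "nat set"
  assume a1: "0 < n" and a2: "0 < k" and "real k \<le> 2 powr (real n / 50)"
    and a4: "real (wpar k n) < real n / 2"
    and a5: "\<forall>t<ppar k n. B t \<subseteq> {..<n} \<and> card (B t) = wpar k n"
    and a6: "\<forall>t<ppar k n. \<forall>t'<ppar k n. t \<noteq> t' \<longrightarrow> B t \<inter> B t' = {}"
    and a7: "C = {..<n} - (\<Union>t<ppar k n. B t)"
  interpret genctx n k B C by unfold_locales (use a1 a2 a4 a5 a6 a7 in auto)
  define S where "S = {dirichlet_form V (uniform_on V) (P_grev k n B C) (\<lambda>x. sqrt (f x)) / entropy V (uniform_on V) f | f.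
       (\<forall>x\<in>V. 0 \<le> f x) \<and> (\<exists>x\<in>V. \<exists>y\<in>V. f x \<noteq> f y)}"
  have nk: "0 < real n * real k" using a1 a2 by simp
  have "S \<noteq> {}"
  proof -
    have "\<not> card V \<le> Suc 0" using card_V_ge2 by simp
    then obtain x y where xy: "x \<in> V" "y \<in> V" "x \<noteq> y" using card_le_Suc0_iff_eq[OF finV] by auto
    define f where "f z = (if z = x then (1::real) else 0)" for z
    have "(\<forall>z\<in>V. 0 \<le> f z) \<and> (\<exists>x\<in>V. \<exists>y\<in>V. f x \<noteq> f y)" using xy unfolding f_def by auto
    then show ?thesis unfolding S_def by blast
  qed
  moreover have "1/32 / (real n * real k) \<le> s" if "s \<in> S" for s
  proof -
    obtain f where s: "s = dirichlet_form V (uniform_on V) (P_grev k n B C) (\<lambda>x. sqrt (f x)) / entropy V (uniform_on V) f"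
      and f0: "\<forall>x\<in>V. 0 \<le> f x" and nc: "\<exists>x\<in>V. \<exists>y\<in>V. f x \<noteq> f y"
      using \<open>s \<in> S\<close> unfolding S_def by blast
    obtain x y where xy: "x \<in> V" "y \<in> V" "f x \<noteq> f y" using nc by blast
    have f0': "\<And>x. x \<in> V \<Longrightarrow> 0 \<le> f x" using f0 by auto
    have epos: "0 < ent V f" by (rule ent_pos[where F=f, OF finV f0' xy])
    have le: "ent V f \<le> 32 * real n * real k * dirichlet_form V (uniform_on V) (P_grev k n B C) (\<lambda>x. sqrt (f x))"
      by (rule main_ineq[OF _ xy]) (use f0 in auto)
    have "1/32 / (real n * real k) = (1 / (32 * real n * real k)) * 1" by simp
    also have "\<dots> \<le> dirichlet_form V (uniform_on V) (P_grev k n B C) (\<lambda>x. sqrt (f x)) / ent V f"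
      using le epos nk by (simp add: field_simps)
    finally show ?thesis unfolding s entropy_ent .
  qed
  ultimately have "1/32 / (real n * real k) \<le> Inf S" by (rule cInf_greatest)
  then show "1/32 / (real n * real k) \<le> log_sobolev V (uniform_on V) (P_grev k n B C)"
    unfolding log_sobolev_def S_def .
qed


end
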